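(* Let $n\ge1$ and let $A,B\in M_n(\mathbb C)$ be unitary. Then $|T(A,B)|\le n^{n^2/2}$, with equality if and only if $A$ and $B$ have no multiple eigenvalues, $A^n$ and $B^n$ are scalar matrices, and the orthonormal eigenbases of $A$ and of $B$ are mutually unbiased.
   Context: $M(A,B)\in M_{n^2}(\mathbb C)$ is the block matrix of $n\times n$ blocks whose $(i,j)$-th block is $A^{j-1}B^{i-1}$ ($i,j=1,\dots,n$), and $T(A,B)=\det M(A,B)$. Two orthonormal bases $u_1,\dots,u_n$ and $v_1,\dots,v_n$ of $\mathbb C^n$ are mutually unbiased if $|u_s^*v_t|^2=1/n$ for all $s,t$. (When $A$ has no multiple eigenvalues, its orthonormal eigenbasis is unique up to phases of the vectors, so mutual unbiasedness is well defined.) *)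

theory Defs
  imports "Jordan_Normal_Form.Schur_Decomposition"
begin

definition unitary_mat :: "nat \<Rightarrow> complex mat \<Rightarrow> bool" where
  "unitary_mat n U \<longleftrightarrow> U \<in> carrier_mat n n \<and>
     U * mat_adjoint U = 1\<^sub>m n \<and> mat_adjoint U * U = 1\<^sub>m n"

text \<open>The block matrix M(A,B) of size n^2: with 0-based block indices i (row) and j (column),
  block (i,j) is A^j B^i, i.e. A^(j-1) B^(i-1) in 1-based indexing.\<close>
definition Mblock :: "nat \<Rightarrow> complex mat \<Rightarrow> complex mat \<Rightarrow> complex mat" where
  "Mblock n A B = mat (n*n) (n*n)
     (\<lambda>(r, c). (A ^\<^sub>m (c div n) * B ^\<^sub>m (r div n)) $$ (r mod n, c mod n))"

definition Tdet :: "nat \<Rightarrow> complex mat \<Rightarrow> complex mat \<Rightarrow> complex" where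
  "Tdet n A B = det (Mblock n A B)"

definition cinner :: "nat \<Rightarrow> complex vec \<Rightarrow> complex vec \<Rightarrow> complex" where
  "cinner n u v = (\<Sum>k<n. cnj (u $ k) * v $ k)"

definition orthonormal_basis :: "nat \<Rightarrow> complex vec list \<Rightarrow> bool" where
  "orthonormal_basis n us \<longleftrightarrow> length us = n \<and> (\<forall>s<n. us ! s \<in> carrier_vec n) \<and>
     (\<forall>s<n. \<forall>t<n. cinner n (us ! s) (us ! t) = (if s = t then 1 else 0))"

definition mutually_unbiased :: "nat \<Rightarrow> complex vec list \<Rightarrow> complex vec list \<Rightarrow> bool" where
  "mutually_unbiased n us vs \<longleftrightarrow> orthonormal_basis n us \<and> orthonormal_basis n vs \<and>
     (\<forall>s<n. \<forall>t<n. (cmod (cinner n (us ! s) (vs ! t)))\<^sup>2 = 1 / real n)"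

definition orthonormal_eigenbasis :: "nat \<Rightarrow> complex mat \<Rightarrow> complex vec list \<Rightarrow> bool" where
  "orthonormal_eigenbasis n A us \<longleftrightarrow> orthonormal_basis n us \<and>
     (\<forall>s<n. \<exists>e. eigenvector A (us ! s) e)"

definition simple_spectrum :: "complex mat \<Rightarrow> bool" where
  "simple_spectrum A \<longleftrightarrow> (\<forall>e. order e (char_poly A) \<le> 1)"

definition scalar_mat :: "nat \<Rightarrow> complex mat \<Rightarrow> bool" where
  "scalar_mat n X \<longleftrightarrow> (\<exists>c. X = c \<cdot>\<^sub>m 1\<^sub>m n)"

end

theory Submission
  imports Defs
begin

abbreviation adj where "adj \<equiv> mat_adjoint"

lemma adj_carrier[simp]: "A \<in> carrier_mat r c \<Longrightarrow> adj (A::complex mat) \<in> carrier_mat c r"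
  unfolding mat_adjoint_def by (auto simp: mat_of_rows_def)

lemma adj_dims[simp]: "dim_row (adj (A::complex mat)) = dim_col A" "dim_col (adj A) = dim_row A"
  unfolding mat_adjoint_def by (auto simp: mat_of_rows_def)

lemma adj_index[simp]: "i < dim_col A \<Longrightarrow> j < dim_row A \<Longrightarrow> adj (A::complex mat) $$ (i,j) = cnj (A $$ (j,i))"
  unfolding mat_adjoint_def by (auto simp: mat_of_rows_def)

lemma adj_adj[simp]: "adj (adj (A::complex mat)) = A"
  by (rule eq_matI, auto)

lemma adj_mult: assumes "A \<in> carrier_mat r k" "B \<in> carrier_mat k c"
  shows "adj (A * (B::complex mat)) = adj B * adj A"
  using assms by (intro eq_matI) (auto simp: scalar_prod_def cnj_sum intro!: sum.cong)

lemma adj_one[simp]: "adj (1\<^sub>m n :: complex mat) = 1\<^sub>m n"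
  by (rule eq_matI, auto)

lemma det_adj: assumes "A \<in> carrier_mat n n" shows "det (adj (A::complex mat)) = cnj (det A)"
proof -
  interpret h: comm_ring_hom cnj by (unfold_locales, auto)
  have "adj A = transpose_mat (map_mat cnj A)" using assms by (intro eq_matI, auto)
  then have "det (adj A) = det (map_mat cnj A)" using assms by (simp add: det_transpose[of _ n])
  also have "\<dots> = cnj (det A)" by simp
  finally show ?thesis .
qed

definition dmat :: "nat \<Rightarrow> (nat \<Rightarrow> complex) \<Rightarrow> complex mat" where
  "dmat n d = mat n n (\<lambda>(i,j). if i = j then d i else 0)"

lemma dmat_carrier[simp]: "dmat n d \<in> carrier_mat n n" and dmat_dims[simp]: "dim_row (dmat n d) = n" "dim_col (dmat n d) = n"
  unfolding dmat_def by auto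

lemma dmat_index[simp]: "i < n \<Longrightarrow> j < n \<Longrightarrow> dmat n d $$ (i,j) = (if i = j then d i else 0)"
  unfolding dmat_def by auto

lemma sum_delta_mult[simp]: "ia < (n::nat) \<Longrightarrow> (\<Sum>ib = 0..<n. f ib * (if ib = ia then g ib else 0)) = f ia * (g ia :: complex)"
proof -
  assume a: "ia < n"
  have "(\<Sum>ib = 0..<n. f ib * (if ib = ia then g ib else 0)) = (\<Sum>ib = 0..<n. (if ib = ia then f ib * g ib else 0))"
    by (rule sum.cong, auto)
  also have "\<dots> = f ia * g ia" using a by (simp add: sum.delta')
  finally show ?thesis .
qed

lemma sum_delta_mult'[simp]: "ia < (n::nat) \<Longrightarrow> (\<Sum>ib = 0..<n. (if ia = ib then g ib else 0) * f ib) = g ia * (f ia :: complex)"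
proof -
  assume a: "ia < n"
  have "(\<Sum>ib = 0..<n. (if ia = ib then g ib else 0) * f ib) = (\<Sum>ib = 0..<n. (if ib = ia then g ib * f ib else 0))"
    by (rule sum.cong, auto)
  also have "\<dots> = g ia * f ia" using a by (simp add: sum.delta')
  finally show ?thesis .
qed

lemma mult_dmat_index: assumes "U \<in> carrier_mat r n" "i < r" "j < n"
  shows "(U * dmat n d) $$ (i,j) = U $$ (i,j) * d j"
proof -
  have "(U * dmat n d) $$ (i,j) = (\<Sum>k<n. U $$ (i,k) * (if k = j then d k else 0))"
    using assms by (simp add: scalar_prod_def lessThan_atLeast0)
  also have "\<dots> = U $$ (i,j) * d j" using assms(3) by (simp add: if_distrib cong: if_cong)
  finally show ?thesis .
qed

lemma UDU_index: assumes "U \<in> carrier_mat n n" "i < n" "j < n"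
  shows "(U * dmat n d * adj U) $$ (i,j) = (\<Sum>k<n. U $$ (i,k) * d k * cnj (U $$ (j,k)))"
  using assms by (simp add: scalar_prod_def lessThan_atLeast0 mult_dmat_index)

lemma adj_mult_index: assumes "U \<in> carrier_mat r n" "V \<in> carrier_mat r m" "i < n" "j < m"
  shows "(adj U * V) $$ (i,j) = (\<Sum>k<r. cnj (U $$ (k,i)) * V $$ (k,j))"
  using assms by (simp add: scalar_prod_def lessThan_atLeast0)

lemma dmat_mult: "dmat n d * dmat n e = dmat n (\<lambda>i. d i * e i)"
  by (rule eq_matI, auto simp: scalar_prod_def)

lemma adj_dmat: "adj (dmat n d) = dmat n (\<lambda>i. cnj (d i))"
  by (rule eq_matI, auto)

lemma dmat_one: "dmat n (\<lambda>_. 1) = 1\<^sub>m n"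
  by (rule eq_matI, auto)

lemma det_dmat: "det (dmat n d) = (\<Prod>i<n. d i)"
proof -
  have "det (dmat n d) = prod_list (diag_mat (dmat n d))"
    by (rule det_upper_triangular, auto simp: upper_triangular_def)
  also have "diag_mat (dmat n d) = map d [0..<n]" by (auto simp: diag_mat_def intro!: nth_equalityI)
  finally show ?thesis by (simp add: prod.distinct_set_conv_list[symmetric] atLeast0LessThan)
qed

lemma unitary_matI: assumes "U \<in> carrier_mat n n" "adj U * U = 1\<^sub>m n" shows "unitary_mat n U"
  using assms mat_mult_left_right_inverse[of "adj U" n U] unfolding unitary_mat_def by auto

lemma unitary_mult: assumes "unitary_mat n U" "unitary_mat n V" shows "unitary_mat n (U * V)"
proof -
  have c: "U \<in> carrier_mat n n" "V \<in> carrier_mat n n" using assms unfolding unitary_mat_def by auto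
  have "adj (U*V) * (U*V) = (adj V * adj U) * (U * V)" using c by (simp add: adj_mult[of _ n n])
  also have "\<dots> = adj V * (adj U * (U * V))" using c
    by (intro assoc_mult_mat[of _ n n _ n _ n]) auto
  also have "adj U * (U * V) = (adj U * U) * V" using c
    by (intro assoc_mult_mat[symmetric, of _ n n _ n _ n]) auto
  also have "adj V * ((adj U * U) * V) = 1\<^sub>m n" using assms c unfolding unitary_mat_def by auto
  finally show ?thesis using c by (intro unitary_matI) auto
qed

lemma unitary_adj: "unitary_mat n U \<Longrightarrow> unitary_mat n (adj U)"
  unfolding unitary_mat_def by auto

lemma unitary_det: assumes "unitary_mat n U" shows "det (adj U) * det U = 1"
proof -
  have c: "U \<in> carrier_mat n n" using assms unfolding unitary_mat_def by auto
  have "det (adj U) * det U = det (adj U * U)" using c by (simp add: det_mult[of _ n])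
  also have "\<dots> = 1" using assms unfolding unitary_mat_def by simp
  finally show ?thesis .
qed


lemma unitary_carrier: "unitary_mat n U \<Longrightarrow> U \<in> carrier_mat n n"
  unfolding unitary_mat_def by auto

lemma unitary_cancel1: assumes "unitary_mat n W" "X \<in> carrier_mat n k"
  shows "adj W * (W * X) = X"
proof -
  have W: "W \<in> carrier_mat n n" using assms unfolding unitary_mat_def by auto
  have "adj W * (W * X) = (adj W * W) * X" using W assms(2) by (simp add: assoc_mult_mat[of _ n n _ n _ k])
  also have "\<dots> = X" using assms unfolding unitary_mat_def by auto
  finally show ?thesis .
qed

lemma unitary_cancel2: assumes "unitary_mat n W" "X \<in> carrier_mat n k"
  shows "W * (adj W * X) = X"
  using unitary_cancel1[OF unitary_adj[OF assms(1)] assms(2)] by simp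

lemma sum_sq_zero: fixes f :: "nat \<Rightarrow> complex"
  assumes "(\<Sum>k\<in>S. f k * cnj (f k)) = 0" "finite S" "k \<in> S" shows "f k = 0"
proof -
  have "(\<Sum>k\<in>S. f k * cnj (f k)) = complex_of_real (\<Sum>k\<in>S. (cmod (f k))^2)"
    unfolding of_real_sum by (rule sum.cong, auto, metis complex_norm_square of_real_power)
  hence "(\<Sum>k\<in>S. (cmod (f k))^2) = 0" using assms(1) by (metis of_real_eq_0_iff)
  hence "(cmod (f k))^2 = 0" using assms(2,3) sum_nonneg_eq_0_iff[of S "\<lambda>k. (cmod (f k))^2"] by auto
  thus ?thesis by simp
qed

lemma unitary_first_col: assumes v: "v \<in> carrier_vec n" "v \<noteq> 0\<^sub>v n"
  shows "\<exists>W s. unitary_mat n W \<and> (\<forall>i<n. W $$ (i,0) = s * v $ i)"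
proof -
  interpret cof_vec_space n "TYPE(complex)" .
  define b where "b = basis_completion v"
  define ws where "ws = gram_schmidt n b"
  from basis_completion[OF v, folded b_def]
  have dist_b: "distinct b" and indep: "\<not> lin_dep (set b)" and b: "set b \<subseteq> carrier_vec n"
    and hdb: "hd b = v" and len_b: "length b = n" by auto
  from gram_schmidt_result[OF b dist_b indep refl, folded ws_def]
  have ws: "set ws \<subseteq> carrier_vec n" "corthogonal ws" "length ws = n" by (auto simp: len_b)
  have n0: "n \<noteq> 0" using v by (cases n, auto)
  from hdb len_b n0 obtain vs where bv: "b = v # vs" by (cases b, auto)
  from gram_schmidt_hd[OF v(1), of vs, folded bv] have hdws: "hd ws = v" unfolding ws_def .
  define W0 where "W0 = mat_of_cols n ws"
  have W0: "W0 \<in> carrier_mat n n" unfolding W0_def using ws by auto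
  define c where "c = (\<lambda>i. (\<Sum>k<n. (cmod (W0 $$ (k,i)))^2))"
  have W0ij: "(adj W0 * W0) $$ (i,j) = (if i = j then complex_of_real (c i) else 0)" if ij: "i < n" "j < n" for i j
  proof -
    have wi: "ws ! i \<in> carrier_vec n" "ws ! j \<in> carrier_vec n" using ws ij by auto
    have "(adj W0 * W0) $$ (i,j) = (\<Sum>k<n. cnj (W0 $$ (k,i)) * W0 $$ (k,j))"
      by (rule adj_mult_index[OF W0 W0 ij])
    also have "\<dots> = (\<Sum>k<n. cnj (ws ! i $ k) * ws ! j $ k)" unfolding W0_def
      using ij ws by (auto simp: mat_of_cols_index)
    also have "\<dots> = ws ! j \<bullet>c ws ! i" using wi
      by (simp add: scalar_prod_def lessThan_atLeast0 mult.commute)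
    finally have e: "(adj W0 * W0) $$ (i,j) = ws ! j \<bullet>c ws ! i" .
    show ?thesis
    proof (cases "i = j")
      case False
      then show ?thesis using e corthogonalD[OF ws(2)] ws ij by auto
    next
      case True
      have "(\<Sum>k<n. cnj (W0 $$ (k,i)) * W0 $$ (k,j)) = complex_of_real (c i)"
        unfolding c_def True of_real_sum by (rule sum.cong, auto, metis complex_norm_square of_real_power mult.commute)
      then show ?thesis using True adj_mult_index[OF W0 W0 ij] by simp
    qed
  qed
  have cpos: "c i > 0" if "i < n" for i
  proof -
    have "(adj W0 * W0) $$ (i,i) \<noteq> 0"
    proof -
      have wi: "ws ! i \<in> carrier_vec n" using ws that by auto
      have "(adj W0 * W0) $$ (i,i) = (\<Sum>k<n. cnj (ws ! i $ k) * ws ! i $ k)"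
        using adj_mult_index[OF W0 W0 that that] that by (simp add: W0_def mat_of_cols_index ws)
      also have "\<dots> = ws ! i \<bullet>c ws ! i" using wi
        by (simp add: scalar_prod_def lessThan_atLeast0 mult.commute)
      finally show ?thesis using corthogonalD[OF ws(2)] ws that by auto
    qed
    hence "c i \<noteq> 0" using W0ij[OF that that] by auto
    moreover have "c i \<ge> 0" unfolding c_def by (auto intro: sum_nonneg)
    ultimately show ?thesis by auto
  qed
  define s where "s = (\<lambda>i. complex_of_real (1 / sqrt (c i)))"
  define W where "W = W0 * dmat n s"
  have W: "W \<in> carrier_mat n n" unfolding W_def using W0 by auto
  have Wij: "W $$ (i,j) = W0 $$ (i,j) * s j" if "i < n" "j < n" for i j
    unfolding W_def by (rule mult_dmat_index[OF W0 that])
  have "adj W * W = 1\<^sub>m n"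
  proof (rule eq_matI)
    fix i j assume ij: "i < dim_row (1\<^sub>m n)" "j < dim_col (1\<^sub>m n)"
    hence ij: "i < n" "j < n" by auto
    have "(adj W * W) $$ (i,j) = (\<Sum>k<n. cnj (W $$ (k,i)) * W $$ (k,j))" by (rule adj_mult_index[OF W W ij])
    also have "\<dots> = cnj (s i) * s j * (\<Sum>k<n. cnj (W0 $$ (k,i)) * W0 $$ (k,j))"
      using ij by (simp add: Wij sum_distrib_left mult_ac)
    also have "\<dots> = cnj (s i) * s j * (adj W0 * W0) $$ (i,j)" using adj_mult_index[OF W0 W0 ij] by simp
    also have "\<dots> = 1\<^sub>m n $$ (i,j)"
    proof -
      have "cnj (s i) * s i * complex_of_real (c i) = 1"
        using cpos[OF ij(1)] unfolding s_def
        by (simp flip: of_real_mult)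
      thus ?thesis using ij by (auto simp add: W0ij)
    qed
    finally show "(adj W * W) $$ (i,j) = 1\<^sub>m n $$ (i,j)" .
  qed (use W in auto)
  hence "unitary_mat n W" using W by (intro unitary_matI) auto
  moreover have "W $$ (i,0) = s 0 * v $ i" if "i < n" for i
  proof -
    have "ws ! 0 = v" using hdws ws n0 by (cases ws, auto)
    thus ?thesis using that n0 ws by (simp add: Wij W0_def mat_of_cols_index)
  qed
  ultimately show ?thesis by blast
qed


lemma mult_adj_index: assumes "X \<in> carrier_mat r n" "Y \<in> carrier_mat c n" "i < r" "j < c"
  shows "(X * adj Y) $$ (i,j) = (\<Sum>k<n. X $$ (i,k) * cnj (Y $$ (j,k)))"
  using assms by (simp add: scalar_prod_def lessThan_atLeast0)

lemma mult_index': assumes "X \<in> carrier_mat r n" "Y \<in> carrier_mat n c" "i < r" "j < c"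
  shows "(X * Y) $$ (i,j) = (\<Sum>k<n. X $$ (i,k) * Y $$ (k,j))"
  using assms by (simp add: scalar_prod_def lessThan_atLeast0)

lemma spectral_normal:
  "A \<in> carrier_mat n n \<Longrightarrow> A * adj A = adj A * A \<Longrightarrow> \<exists>U d. unitary_mat n U \<and> A = U * dmat n d * adj U"
proof (induction n arbitrary: A)
  case 0
  show ?case
    by (rule exI[of _ "1\<^sub>m 0"], rule exI[of _ "\<lambda>_. 0"], insert 0(1))
       (auto simp: unitary_mat_def intro!: eq_matI)
next
  case (Suc m)
  let ?n = "Suc m"
  have A: "A \<in> carrier_mat ?n ?n" by fact
  have nA: "A * adj A = adj A * A" by fact
  obtain as where cp: "char_poly A = (\<Prod>a\<leftarrow>as. [:- a, 1:])" and las: "length as = ?n"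
    using char_poly_factorized[OF A] by blast
  obtain e rest where as: "as = e # rest" using las by (cases as, auto)
  have "poly (char_poly A) e = 0" unfolding cp as by simp
  hence ev: "eigenvalue A e" using eigenvalue_root_char_poly[OF A] by simp
  define v where "v = find_eigenvector A e"
  have evv: "eigenvector A v e" unfolding v_def by (rule find_eigenvector[OF A ev])
  hence v: "v \<in> carrier_vec ?n" "v \<noteq> 0\<^sub>v ?n" and Av: "A *\<^sub>v v = e \<cdot>\<^sub>v v"
    using A unfolding eigenvector_def by auto
  obtain W s where W: "unitary_mat ?n W" and W0: "\<And>i. i < ?n \<Longrightarrow> W $$ (i,0) = s * v $ i"
    using unitary_first_col[OF v] by blast
  have Wc: "W \<in> carrier_mat ?n ?n" using W unitary_carrier by auto
  define C where "C = adj W * (A * W)"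
  have Cc: "C \<in> carrier_mat ?n ?n" unfolding C_def using Wc A by auto
  have AW0: "(A * W) $$ (k,0) = e * W $$ (k,0)" if k: "k < ?n" for k
  proof -
    have "(A * W) $$ (k,0) = (\<Sum>l<?n. A $$ (k,l) * W $$ (l,0))" by (rule mult_index'[OF A Wc k], simp)
    also have "\<dots> = s * (\<Sum>l<?n. A $$ (k,l) * v $ l)" unfolding sum_distrib_left
      by (rule sum.cong) (auto simp: W0)
    also have "(\<Sum>l<?n. A $$ (k,l) * v $ l) = (A *\<^sub>v v) $ k" using A v k
      by (simp add: scalar_prod_def lessThan_atLeast0)
    also have "\<dots> = e * v $ k" using Av k v by simp
    finally show ?thesis using W0[OF k] by simp
  qed
  have C0: "C $$ (i,0) = (if i = 0 then e else 0)" if i: "i < ?n" for i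
  proof -
    have "C $$ (i,0) = (\<Sum>k<?n. cnj (W $$ (k,i)) * (A * W) $$ (k,0))"
      unfolding C_def by (rule adj_mult_index[OF Wc _ i], insert A Wc, auto)
    also have "\<dots> = e * (\<Sum>k<?n. cnj (W $$ (k,i)) * W $$ (k,0))"
      unfolding sum_distrib_left by (rule sum.cong) (auto simp: AW0)
    also have "(\<Sum>k<?n. cnj (W $$ (k,i)) * W $$ (k,0)) = (adj W * W) $$ (i,0)"
      by (rule adj_mult_index[symmetric, OF Wc Wc i], simp)
    also have "\<dots> = (if i = 0 then 1 else 0)" using W i unfolding unitary_mat_def by auto
    finally show ?thesis by simp
  qed
  have adjC: "adj C = adj W * (adj A * W)"
  proof -
    have "adj C = adj (A * W) * adj (adj W)" unfolding C_def
      by (rule adj_mult[of _ ?n ?n _ ?n], insert A Wc, auto)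
    also have "adj (A * W) = adj W * adj A" by (rule adj_mult[OF A Wc])
    finally show ?thesis using A Wc by (simp add: assoc_mult_mat[of _ ?n ?n _ ?n _ ?n] mult_carrier_mat[of _ ?n ?n _ ?n])
  qed
  have nC: "C * adj C = adj C * C"
  proof -
    have "C * adj C = adj W * (A * (W * (adj W * (adj A * W))))"
      unfolding adjC unfolding C_def using A Wc by (simp add: assoc_mult_mat[of _ ?n ?n _ ?n _ ?n] mult_carrier_mat[of _ ?n ?n _ ?n])
    also have "W * (adj W * (adj A * W)) = adj A * W" by (rule unitary_cancel2[OF W], insert A Wc, auto)
    also have "A * (adj A * W) = (A * adj A) * W" using A Wc by (simp add: assoc_mult_mat[of _ ?n ?n _ ?n _ ?n] mult_carrier_mat[of _ ?n ?n _ ?n])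
    also have "\<dots> = (adj A * A) * W" using nA by simp
    also have "(adj A * A) * W = adj A * (A * W)" using A Wc by (simp add: assoc_mult_mat[of _ ?n ?n _ ?n _ ?n] mult_carrier_mat[of _ ?n ?n _ ?n])
    also have "adj A * (A * W) = adj A * (W * (adj W * (A * W)))"
      using unitary_cancel2[OF W, of "A * W" ?n] A Wc by simp
    also have "adj W * (adj A * (W * (adj W * (A * W)))) = adj C * C"
      unfolding adjC unfolding C_def using A Wc by (simp add: assoc_mult_mat[of _ ?n ?n _ ?n _ ?n] mult_carrier_mat[of _ ?n ?n _ ?n])
    finally show ?thesis .
  qed
  have Crow: "C $$ (0, Suc j) = 0" if j: "j < m" for j
  proof -
    have "(C * adj C) $$ (0,0) = (\<Sum>k<?n. C $$ (0,k) * cnj (C $$ (0,k)))"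
      by (rule mult_adj_index[OF Cc Cc], auto)
    also have "\<dots> = C $$ (0,0) * cnj (C $$ (0,0)) + (\<Sum>k<m. C $$ (0,Suc k) * cnj (C $$ (0,Suc k)))"
      by (simp add: sum.lessThan_Suc_shift del: sum.lessThan_Suc)
    finally have 1: "(C * adj C) $$ (0,0) = e * cnj e + (\<Sum>k<m. C $$ (0,Suc k) * cnj (C $$ (0,Suc k)))"
      using C0[of 0] by simp
    have "(adj C * C) $$ (0,0) = (\<Sum>k<?n. cnj (C $$ (k,0)) * C $$ (k,0))"
      by (rule adj_mult_index[OF Cc Cc], auto)
    also have "\<dots> = cnj e * e" by (simp add: sum.lessThan_Suc_shift C0 del: sum.lessThan_Suc)
    finally have 2: "(adj C * C) $$ (0,0) = cnj e * e" .
    have "(\<Sum>k<m. C $$ (0,Suc k) * cnj (C $$ (0,Suc k))) = 0" using 1 2 nC by simp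
    from sum_sq_zero[OF this] j show ?thesis by auto
  qed
  define A3 where "A3 = mat m m (\<lambda>(i,j). C $$ (Suc i, Suc j))"
  have A3c: "A3 \<in> carrier_mat m m" unfolding A3_def by auto
  have A3i: "A3 $$ (i,j) = C $$ (Suc i, Suc j)" if "i < m" "j < m" for i j
    using that unfolding A3_def by auto
  have nA3: "A3 * adj A3 = adj A3 * A3"
  proof (rule eq_matI)
    fix i j assume "i < dim_row (adj A3 * A3)" "j < dim_col (adj A3 * A3)"
    hence ij: "i < m" "j < m" using A3c by auto
    have "(A3 * adj A3) $$ (i,j) = (\<Sum>k<m. A3 $$ (i,k) * cnj (A3 $$ (j,k)))"
      by (rule mult_adj_index[OF A3c A3c ij])
    also have "\<dots> = (\<Sum>k<m. C $$ (Suc i,Suc k) * cnj (C $$ (Suc j, Suc k)))"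
      using ij by (simp add: A3i)
    also have "\<dots> = (\<Sum>k<?n. C $$ (Suc i,k) * cnj (C $$ (Suc j, k)))"
      using ij by (simp add: sum.lessThan_Suc_shift C0 del: sum.lessThan_Suc)
    also have "\<dots> = (C * adj C) $$ (Suc i, Suc j)"
      by (rule mult_adj_index[symmetric, OF Cc Cc], insert ij, auto)
    also have "\<dots> = (adj C * C) $$ (Suc i, Suc j)" using nC by simp
    also have "\<dots> = (\<Sum>k<?n. cnj (C $$ (k, Suc i)) * C $$ (k, Suc j))"
      by (rule adj_mult_index[OF Cc Cc], insert ij, auto)
    also have "\<dots> = (\<Sum>k<m. cnj (C $$ (Suc k,Suc i)) * C $$ (Suc k, Suc j))"
      using ij by (simp add: sum.lessThan_Suc_shift Crow del: sum.lessThan_Suc)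
    also have "\<dots> = (\<Sum>k<m. cnj (A3 $$ (k,i)) * A3 $$ (k,j))"
      using ij by (simp add: A3i)
    also have "\<dots> = (adj A3 * A3) $$ (i,j)"
      by (rule adj_mult_index[symmetric, OF A3c A3c ij])
    finally show "(A3 * adj A3) $$ (i,j) = (adj A3 * A3) $$ (i,j)" .
  qed (use A3c in auto)
  obtain U3 d3 where U3: "unitary_mat m U3" and A3eq: "A3 = U3 * dmat m d3 * adj U3"
    using Suc.IH[OF A3c nA3] by blast
  have U3c: "U3 \<in> carrier_mat m m" using U3 unitary_carrier by auto
  define U' where "U' = mat ?n ?n (\<lambda>(i,j). if i = 0 \<and> j = 0 then 1 else if i = 0 \<or> j = 0 then 0 else U3 $$ (i - 1, j - 1))"
  define d' where "d' = (\<lambda>i. if i = 0 then e else d3 (i - 1))"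
  have U'c: "U' \<in> carrier_mat ?n ?n" unfolding U'_def by auto
  have U'i: "U' $$ (i,j) = (if i = 0 \<and> j = 0 then 1 else if i = 0 \<or> j = 0 then 0 else U3 $$ (i - 1, j - 1))"
    if "i < ?n" "j < ?n" for i j using that unfolding U'_def by auto
  have "adj U' * U' = 1\<^sub>m ?n"
  proof (rule eq_matI)
    fix i j assume "i < dim_row (1\<^sub>m ?n)" "j < dim_col (1\<^sub>m ?n)"
    hence ij: "i < ?n" "j < ?n" by auto
    have "(adj U' * U') $$ (i,j) = (\<Sum>k<?n. cnj (U' $$ (k,i)) * U' $$ (k,j))"
      by (rule adj_mult_index[OF U'c U'c ij])
    also have "\<dots> = 1\<^sub>m ?n $$ (i,j)"
    proof (cases i)
      case 0
      then show ?thesis using ij by (simp add: sum.lessThan_Suc_shift U'i del: sum.lessThan_Suc)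
    next
      case (Suc i')
      show ?thesis
      proof (cases j)
        case 0
        then show ?thesis using ij Suc by (simp add: sum.lessThan_Suc_shift U'i del: sum.lessThan_Suc)
      next
        case (Suc j')
        have "(\<Sum>k<?n. cnj (U' $$ (k,i)) * U' $$ (k,j)) = (\<Sum>k<m. cnj (U3 $$ (k,i')) * U3 $$ (k,j'))"
          using ij Suc \<open>i = Suc i'\<close> by (simp add: sum.lessThan_Suc_shift U'i del: sum.lessThan_Suc)
        also have "\<dots> = (adj U3 * U3) $$ (i',j')"
          by (rule adj_mult_index[symmetric, OF U3c U3c], insert ij Suc \<open>i = Suc i'\<close>, auto)
        also have "\<dots> = 1\<^sub>m m $$ (i',j')" using U3 unfolding unitary_mat_def by simp
        finally show ?thesis using ij Suc \<open>i = Suc i'\<close> by simp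
      qed
    qed
    finally show "(adj U' * U') $$ (i,j) = 1\<^sub>m ?n $$ (i,j)" .
  qed (use U'c in auto)
  hence U': "unitary_mat ?n U'" using U'c by (intro unitary_matI) auto
  have Ceq: "C = U' * dmat ?n d' * adj U'"
  proof (rule eq_matI)
    fix i j assume "i < dim_row (U' * dmat ?n d' * adj U')" "j < dim_col (U' * dmat ?n d' * adj U')"
    hence ij: "i < ?n" "j < ?n" using U'c by auto
    have r: "(U' * dmat ?n d' * adj U') $$ (i,j) = (\<Sum>k<?n. U' $$ (i,k) * d' k * cnj (U' $$ (j,k)))"
      by (rule UDU_index[OF U'c ij])
    show "C $$ (i,j) = (U' * dmat ?n d' * adj U') $$ (i,j)"
    proof (cases i)
      case 0
      then show ?thesis using ij r C0 Crow
        by (cases j) (auto simp: sum.lessThan_Suc_shift U'i d'_def simp del: sum.lessThan_Suc)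
    next
      case (Suc i')
      show ?thesis
      proof (cases j)
        case 0
        then show ?thesis using ij r C0 Suc by (simp add: sum.lessThan_Suc_shift U'i d'_def del: sum.lessThan_Suc)
      next
        case (Suc j')
        have "(\<Sum>k<?n. U' $$ (i,k) * d' k * cnj (U' $$ (j,k))) = (\<Sum>k<m. U3 $$ (i',k) * d3 k * cnj (U3 $$ (j',k)))"
          using ij Suc \<open>i = Suc i'\<close> by (simp add: sum.lessThan_Suc_shift U'i d'_def del: sum.lessThan_Suc)
        also have "\<dots> = A3 $$ (i',j')" unfolding A3eq
          by (rule UDU_index[symmetric, OF U3c], insert ij Suc \<open>i = Suc i'\<close>, auto)
        also have "\<dots> = C $$ (i,j)" using A3i ij Suc \<open>i = Suc i'\<close> by simp
        finally show ?thesis using r by simp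
      qed
    qed
  qed (use U'c Cc in auto)
  have "A = W * C * adj W"
  proof -
    have "W * C * adj W = W * (adj W * (A * W)) * adj W" unfolding C_def ..
    also have "W * (adj W * (A * W)) = A * W" by (rule unitary_cancel2[OF W], insert A Wc, auto)
    also have "A * W * adj W = A * (W * adj W)" using A Wc by (simp add: assoc_mult_mat[of _ ?n ?n _ ?n _ ?n] mult_carrier_mat[of _ ?n ?n _ ?n])
    also have "\<dots> = A" using W A unfolding unitary_mat_def by simp
    finally show ?thesis by simp
  qed
  also have "\<dots> = (W * U') * dmat ?n d' * adj (W * U')"
    unfolding Ceq using Wc U'c adj_mult[OF Wc U'c]
    by (simp add: assoc_mult_mat[of _ ?n ?n _ ?n _ ?n] mult_carrier_mat[of _ ?n ?n _ ?n])
  finally show ?case using unitary_mult[OF W U'] by blast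
qed


lemma exp_strict: fixes x :: real assumes "x \<noteq> 0" shows "1 + x < exp x"
proof (cases "1 + x / 2 \<ge> 0")
  case True
  have "1 + x / 2 \<le> exp (x/2)" using exp_ge_add_one_self[of "x/2"] by simp
  hence "(1 + x/2)^2 \<le> (exp (x/2))^2" using True by (intro power_mono) auto
  also have "(exp (x/2))^2 = exp x" by (simp add: power2_eq_square flip: exp_add)
  finally have "(1 + x/2)^2 \<le> exp x" .
  moreover have "1 + x < (1 + x/2)^2" using assms by (cases "x > 0") (auto simp: power2_eq_square field_simps zero_less_mult_iff)
  ultimately show ?thesis by simp
next
  case False
  hence "1 + x < 0" by simp
  thus ?thesis using exp_gt_zero[of x] by linarith
qed

lemma amgm: fixes mu :: "nat \<Rightarrow> real" and c :: real
  assumes nn: "\<And>k. k < N \<Longrightarrow> mu k \<ge> 0" and c: "c > 0" and s: "(\<Sum>k<N. mu k) = real N * c"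
  shows "(\<Prod>k<N. mu k) \<le> c^N" and "(\<Prod>k<N. mu k) = c^N \<Longrightarrow> (\<forall>k<N. mu k = c)"
proof -
  define x where "x = (\<lambda>k. mu k / c)"
  have xnn: "\<And>k. k < N \<Longrightarrow> x k \<ge> 0" unfolding x_def using nn c by auto
  have xle: "x k \<le> exp (x k - 1)" for k using exp_ge_add_one_self[of "x k - 1"] by simp
  have sx: "(\<Sum>k<N. x k - 1) = 0" unfolding x_def sum_subtractf sum_divide_distrib[symmetric] s using c by simp
  have pe: "(\<Prod>k<N. exp (x k - 1)) = 1" using exp_sum[of "{..<N}" "\<lambda>k. x k - 1"] sx by simp
  have px: "(\<Prod>k<N. mu k) = c^N * (\<Prod>k<N. x k)" unfolding x_def prod_dividef using c by simp
  have "(\<Prod>k<N. x k) \<le> 1" using prod_mono[of "{..<N}" x "\<lambda>k. exp (x k - 1)"] xnn xle pe by auto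
  thus "(\<Prod>k<N. mu k) \<le> c^N" unfolding px using c by (simp add: mult_left_le)
  assume eq: "(\<Prod>k<N. mu k) = c^N"
  hence p1: "(\<Prod>k<N. x k) = 1" unfolding px using c by simp
  show "\<forall>k<N. mu k = c"
  proof (rule ccontr)
    assume "\<not> (\<forall>k<N. mu k = c)"
    then obtain j where j: "j < N" "mu j \<noteq> c" by auto
    hence "x j \<noteq> 1" unfolding x_def using c by auto
    hence lt: "x j < exp (x j - 1)" using exp_strict[of "x j - 1"] by simp
    have fin: "finite {..<N}" by simp
    have "(\<Prod>k<N. x k) = x j * (\<Prod>k\<in>{..<N}-{j}. x k)" using j prod.remove[OF fin, of j x] by simp
    also have "\<dots> \<le> x j * (\<Prod>k\<in>{..<N}-{j}. exp (x k - 1))"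
      by (intro mult_left_mono prod_mono, insert xnn xle j, auto)
    also have "\<dots> < exp (x j - 1) * (\<Prod>k\<in>{..<N}-{j}. exp (x k - 1))"
      by (intro mult_strict_right_mono lt prod_pos, auto)
    also have "\<dots> = (\<Prod>k<N. exp (x k - 1))" using j prod.remove[OF fin, of j "\<lambda>k. exp (x k - 1)"] by simp
    finally show False using p1 pe by simp
  qed
qed

lemma hadamard_eq:
  fixes M :: "complex mat"
  assumes M: "M \<in> carrier_mat N N" and c: "c > 0"
    and diag: "\<And>i. i < N \<Longrightarrow> (adj M * M) $$ (i,i) = complex_of_real c"
  shows "(cmod (det M))^2 \<le> c^N"
    and "(cmod (det M))^2 = c^N \<longleftrightarrow> adj M * M = dmat N (\<lambda>_. complex_of_real c)"
proof -
  define G where "G = adj M * M"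
  have Gc: "G \<in> carrier_mat N N" unfolding G_def using M by auto
  have adjG: "adj G = G" unfolding G_def using adj_mult[of "adj M" N N M N] M by simp
  obtain U d where U: "unitary_mat N U" and Geq: "G = U * dmat N d * adj U"
    using spectral_normal[OF Gc] adjG by auto
  have Uc: "U \<in> carrier_mat N N" using U unitary_carrier by auto
  have detM: "det G = complex_of_real ((cmod (det M))^2)"
  proof -
    have "det G = cnj (det M) * det M" unfolding G_def using M by (simp add: det_mult[of _ N] det_adj)
    then show ?thesis by (metis complex_norm_square mult.commute of_real_power)
  qed
  have detG: "det G = (\<Prod>k<N. d k)"
  proof -
    have "det G = det U * det (dmat N d) * det (adj U)" unfolding Geq using Uc
      by (simp add: det_mult[of _ N])
    also have "\<dots> = det (dmat N d) * (det (adj U) * det U)" by simp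
    finally show ?thesis using unitary_det[OF U] by (simp add: det_dmat)
  qed
  define X where "X = M * U"
  have Xc: "X \<in> carrier_mat N N" unfolding X_def using M Uc by auto
  have dk: "d k = complex_of_real (\<Sum>l<N. (cmod (X $$ (l,k)))^2)" if k: "k < N" for k
  proof -
    have "adj U * G * U = adj U * (U * (dmat N d * (adj U * U)))"
      unfolding Geq using Uc by (simp add: assoc_mult_mat[of _ N N _ N _ N] mult_carrier_mat[of _ N N _ N])
    also have "\<dots> = dmat N d" using U Uc unitary_cancel1[OF U, of "dmat N d" N] unfolding unitary_mat_def by simp
    finally have 1: "adj U * G * U = dmat N d" .
    have "adj U * G * U = adj X * X" unfolding G_def X_def using M Uc adj_mult[OF M Uc]
      by (simp add: assoc_mult_mat[of _ N N _ N _ N] mult_carrier_mat[of _ N N _ N])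
    hence "d k = (adj X * X) $$ (k,k)" using 1 k by (metis dmat_index)
    also have "\<dots> = (\<Sum>l<N. cnj (X $$ (l,k)) * X $$ (l,k))" by (rule adj_mult_index[OF Xc Xc k k])
    also have "\<dots> = complex_of_real (\<Sum>l<N. (cmod (X $$ (l,k)))^2)" unfolding of_real_sum
      by (rule sum.cong, auto, metis complex_norm_square of_real_power mult.commute)
    finally show ?thesis .
  qed
  define mu where "mu = (\<lambda>k. \<Sum>l<N. (cmod (X $$ (l,k)))^2)"
  have mnn: "mu k \<ge> 0" for k unfolding mu_def by (auto intro: sum_nonneg)
  have sumd: "(\<Sum>k<N. d k) = (\<Sum>i<N. G $$ (i,i))"
  proof -
    have "(\<Sum>i<N. G $$ (i,i)) = (\<Sum>i<N. \<Sum>k<N. U $$ (i,k) * d k * cnj (U $$ (i,k)))"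
      unfolding Geq by (rule sum.cong, simp, rule UDU_index[OF Uc], auto)
    also have "\<dots> = (\<Sum>k<N. d k * (\<Sum>i<N. cnj (U $$ (i,k)) * U $$ (i,k)))"
      by (subst sum.swap, simp add: sum_distrib_left mult_ac)
    also have "\<dots> = (\<Sum>k<N. d k * (adj U * U) $$ (k,k))"
      by (rule sum.cong, simp, subst adj_mult_index[OF Uc Uc], auto)
    also have "\<dots> = (\<Sum>k<N. d k)" using U unfolding unitary_mat_def by simp
    finally show ?thesis by simp
  qed
  have smu: "(\<Sum>k<N. mu k) = N * c"
  proof -
    have "complex_of_real (\<Sum>k<N. mu k) = (\<Sum>k<N. d k)" unfolding of_real_sum mu_def by (simp add: dk)
    also have "\<dots> = (\<Sum>i<N. complex_of_real c)" unfolding sumd G_def by (rule sum.cong, auto simp: diag)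
    also have "\<dots> = complex_of_real (N * c)" by simp
    finally show ?thesis by (simp only: of_real_eq_iff)
  qed
  have pmu: "(cmod (det M))^2 = (\<Prod>k<N. mu k)"
  proof -
    have "complex_of_real ((cmod (det M))^2) = complex_of_real (\<Prod>k<N. mu k)"
      unfolding detM[symmetric] detG of_real_prod mu_def by (simp add: dk)
    thus ?thesis by (simp only: of_real_eq_iff)
  qed
  show "(cmod (det M))^2 \<le> c^N" unfolding pmu by (rule amgm(1)[OF _ c smu], rule mnn)
  show "(cmod (det M))^2 = c^N \<longleftrightarrow> adj M * M = dmat N (\<lambda>_. complex_of_real c)"
  proof
    assume "(cmod (det M))^2 = c^N"
    hence "(\<Prod>k<N. mu k) = c^N" using pmu by simp
    hence "\<forall>k<N. mu k = c" by (rule amgm(2)[OF mnn c smu])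
    hence dc: "dmat N d = dmat N (\<lambda>_. complex_of_real c)"
      by (intro eq_matI, auto simp: dk mu_def)
    have "G = U * (complex_of_real c \<cdot>\<^sub>m 1\<^sub>m N) * adj U" unfolding Geq dc
      by (rule arg_cong2[where f="(*)"], rule arg_cong2[where f="(*)"], auto intro!: eq_matI)
    also have "\<dots> = complex_of_real c \<cdot>\<^sub>m (U * adj U)"
    proof -
      have "U * (complex_of_real c \<cdot>\<^sub>m 1\<^sub>m N) = complex_of_real c \<cdot>\<^sub>m U"
        using mult_smult_distrib[OF Uc, of "1\<^sub>m N" N] Uc by simp
      thus ?thesis using mult_smult_assoc_mat[OF Uc, of "adj U" N] Uc by simp
    qed
    also have "\<dots> = dmat N (\<lambda>_. complex_of_real c)" using U unfolding unitary_mat_def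
      by (auto intro!: eq_matI)
    finally show "adj M * M = dmat N (\<lambda>_. complex_of_real c)" unfolding G_def .
  next
    assume "adj M * M = dmat N (\<lambda>_. complex_of_real c)"
    hence "det G = complex_of_real (c^N)" unfolding G_def by (simp add: det_dmat)
    thus "(cmod (det M))^2 = c^N" unfolding detM by (simp only: of_real_eq_iff)
  qed
qed


lemma cnj_unit: "cmod z = 1 \<Longrightarrow> cnj z * z = 1"
  by (metis complex_norm_square mult.commute of_real_1 one_power2)

lemma cnj_unit': "cmod z = 1 \<Longrightarrow> z * cnj z = 1"
  using cnj_unit by (simp add: mult.commute)

lemma omega_pow_ne1: fixes d n :: nat assumes "0 < d" "d < n"
  shows "cis (2 * pi / real n) ^ d \<noteq> 1"
proof
  assume "cis (2 * pi / n) ^ d = 1"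
  hence "cis (real d * (2 * pi / n)) = 1" by (simp add: DeMoivre)
  hence "cos (real d * (2 * pi / n)) = 1" by (metis Re_complex_of_real cis.sel(1) complex_Re_of_int of_int_1)
  then obtain m :: int where m: "real d * (2 * pi / n) = real_of_int m * 2 * pi" using cos_one_2pi_int by blast
  have n0: "real n > 0" using assms by simp
  have "real d = real_of_int m * real n" using m n0 by (simp add: field_simps)
  hence "int d = m * int n" by (metis of_int_eq_iff of_int_mult of_int_of_nat_eq)
  moreover have "int d > 0" "int d < int n" using assms by auto
  ultimately show False
    by (metis mult_less_cancel_right2 linorder_not_le mult_right_le_imp_le of_nat_0_le_iff mult_pos_pos
        zero_less_mult_pos2 int_one_le_iff_zero_less mult.commute mult_le_cancel_right1 order_less_le_trans less_irrefl)
qed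

lemma root_sum: fixes a :: "nat \<Rightarrow> complex"
  assumes inj: "inj_on a {..<n}" and pw: "\<And>k. k < n \<Longrightarrow> a k ^ n = \<alpha>" and al: "\<alpha> \<noteq> 0"
    and d: "0 < d" "d < n"
  shows "(\<Sum>k<n. a k ^ d) = 0"
proof -
  have n: "n > 0" using d by simp
  define R where "R = a ` {..<n}"
  define Z where "Z = {z. z ^ n = \<alpha>}"
  have cR: "card R = n" unfolding R_def using card_image[OF inj] by simp
  have cZ: "card Z = n" unfolding Z_def using card_nth_roots[OF al n] .
  have fZ: "finite Z" by (rule ccontr) (use cZ n in auto)
  have RZ: "R \<subseteq> Z" unfolding R_def Z_def using pw by auto
  have RZe: "R = Z" using card_subset_eq[OF fZ RZ] cR cZ by simp
  define w where "w = cis (2 * pi / real n)"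
  have wn: "w ^ n = 1" unfolding w_def using n by (simp add: DeMoivre)
  have w0: "w \<noteq> 0" unfolding w_def by simp
  have wZ: "(\<lambda>z. w * z) ` Z \<subseteq> Z" unfolding Z_def using wn by (auto simp: power_mult_distrib)
  have winj: "inj_on (\<lambda>z. w * z) Z" using w0 by (auto intro: inj_onI)
  have wZe: "(\<lambda>z. w * z) ` Z = Z" using card_subset_eq[OF fZ wZ] card_image[OF winj] by simp
  have "(\<Sum>k<n. a k ^ d) = (\<Sum>z\<in>R. z ^ d)" unfolding R_def using sum.reindex[OF inj, of "\<lambda>z. z ^ d"] by simp
  also have "\<dots> = (\<Sum>z\<in>Z. z ^ d)" using RZe by simp
  finally have e: "(\<Sum>k<n. a k ^ d) = (\<Sum>z\<in>Z. z ^ d)" .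
  have "(\<Sum>z\<in>Z. z ^ d) = (\<Sum>z\<in>(\<lambda>z. w * z) ` Z. z ^ d)" using wZe by simp
  also have "\<dots> = (\<Sum>z\<in>Z. (w * z) ^ d)" using sum.reindex[OF winj, of "\<lambda>z. z ^ d"] by simp
  also have "\<dots> = w ^ d * (\<Sum>z\<in>Z. z ^ d)" by (simp add: power_mult_distrib sum_distrib_left)
  finally have "(1 - w ^ d) * (\<Sum>z\<in>Z. z ^ d) = 0" by (simp add: algebra_simps)
  moreover have "w ^ d \<noteq> 1" unfolding w_def by (rule omega_pow_ne1[OF d])
  ultimately show ?thesis using e by simp
qed

lemma geom_sum_zero: fixes z :: complex
  assumes "z \<noteq> 1" shows "(\<Sum>i<n. z ^ i) = 0 \<longleftrightarrow> z ^ n = 1"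
  using assms by (simp add: sum_gp_strict)

lemma geom_sum_one: "(\<Sum>i<n. (1::complex) ^ i) = of_nat n" by simp


definition Ssum :: "nat \<Rightarrow> (nat \<Rightarrow> complex) \<Rightarrow> nat \<Rightarrow> nat \<Rightarrow> complex" where
  "Ssum n b s t = (\<Sum>i<n. (cnj (b s) * b t)^i)"

definition Qcond :: "nat \<Rightarrow> (nat \<Rightarrow> complex) \<Rightarrow> (nat \<Rightarrow> complex) \<Rightarrow> (nat \<Rightarrow> nat \<Rightarrow> complex) \<Rightarrow> bool" where
  "Qcond n a b w \<longleftrightarrow> (\<forall>j<n. \<forall>j'<n. \<forall>s<n. \<forall>t<n.
     (\<Sum>k<n. cnj (w k s) * w k t * cnj (a k)^j' * a k^j) * Ssum n b s t = (if j = j' \<and> s = t then of_nat n else 0))"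

definition Rcond :: "nat \<Rightarrow> (nat \<Rightarrow> complex) \<Rightarrow> (nat \<Rightarrow> complex) \<Rightarrow> (nat \<Rightarrow> nat \<Rightarrow> complex) \<Rightarrow> bool" where
  "Rcond n a b w \<longleftrightarrow> inj_on a {..<n} \<and> inj_on b {..<n} \<and> (\<forall>k<n. \<forall>l<n. a k^n = a l^n) \<and>
     (\<forall>k<n. \<forall>l<n. b k^n = b l^n) \<and> (\<forall>k<n. \<forall>s<n. (cmod (w k s))^2 = 1 / real n)"

lemma Ssum_diag: "cmod (b s) = 1 \<Longrightarrow> Ssum n b s s = of_nat n"
  unfolding Ssum_def by (simp add: cnj_unit)

lemma sum_pow_cnj_self: "cmod z = 1 \<Longrightarrow> (\<Sum>j<n. cnj z ^ j * z ^ j) = of_nat n"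
  by (simp add: cnj_unit flip: power_mult_distrib)

lemma vander:
  fixes a q :: "nat \<Rightarrow> complex"
  assumes n: "n > 0" and a: "\<And>k. k < n \<Longrightarrow> cmod (a k) = 1"
    and H: "\<And>j j'. j < n \<Longrightarrow> j' < n \<Longrightarrow> (\<Sum>k<n. q k * cnj (a k)^j' * a k^j) = (if j = j' then 1 else 0)"
  shows "\<And>k. k < n \<Longrightarrow> q k = 1 / of_nat n"
    and "\<And>k l. k < n \<Longrightarrow> l < n \<Longrightarrow> k \<noteq> l \<Longrightarrow> (\<Sum>j<n. cnj (a k)^j * a l^j) = 0"
proof -
  define E where "E = mat n n (\<lambda>(j,k). a k ^ j)"
  have Ec: "E \<in> carrier_mat n n" unfolding E_def by auto
  have Ei: "E $$ (j,k) = a k ^ j" if "j < n" "k < n" for j k using that unfolding E_def by auto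
  define D where "D = dmat n q"
  have ED: "(E * D) $$ (j,k) = a k ^ j * q k" if "j < n" "k < n" for j k
    unfolding D_def using mult_dmat_index[OF Ec that] that Ei by simp
  have EDc: "E * D \<in> carrier_mat n n" unfolding D_def using Ec by auto
  have "E * D * adj E = 1\<^sub>m n"
  proof (rule eq_matI)
    fix j j' assume "j < dim_row (1\<^sub>m n)" "j' < dim_col (1\<^sub>m n)"
    hence jj: "j < n" "j' < n" by auto
    have "(E * D * adj E) $$ (j,j') = (\<Sum>k<n. (E * D) $$ (j,k) * cnj (E $$ (j',k)))"
      by (rule mult_adj_index[OF EDc Ec jj])
    also have "\<dots> = (\<Sum>k<n. q k * cnj (a k)^j' * a k^j)"
      by (rule sum.cong, simp, simp add: ED Ei jj)
    also have "\<dots> = 1\<^sub>m n $$ (j,j')" using H[OF jj] jj by simp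
    finally show "(E * D * adj E) $$ (j,j') = 1\<^sub>m n $$ (j,j')" .
  qed (use Ec EDc in auto)
  hence inv: "adj E * (E * D) = 1\<^sub>m n" using mat_mult_left_right_inverse[OF EDc _ ] Ec by auto
  have key: "(\<Sum>j<n. cnj (a k)^j * a l^j) * q l = (if k = l then 1 else 0)" if kl: "k < n" "l < n" for k l
  proof -
    have "(adj E * (E * D)) $$ (k,l) = (\<Sum>j<n. cnj (E $$ (j,k)) * (E * D) $$ (j,l))"
      by (rule adj_mult_index[OF Ec EDc kl])
    also have "\<dots> = (\<Sum>j<n. cnj (a k)^j * a l^j) * q l" unfolding sum_distrib_right
      by (rule sum.cong, simp, simp add: ED Ei kl)
    finally show ?thesis using inv kl by simp
  qed
  show qk: "q k = 1 / of_nat n" if k: "k < n" for k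
  proof -
    have "of_nat n * q k = 1" using key[OF k k] sum_pow_cnj_self[OF a[OF k]] by simp
    thus ?thesis using n by (simp add: field_simps)
  qed
  show "(\<Sum>j<n. cnj (a k)^j * a l^j) = 0" if "k < n" "l < n" "k \<noteq> l" for k l
    using key[OF that(1,2)] qk[OF that(2)] that(3) n by simp
qed

lemma Q_imp_R:
  fixes a b :: "nat \<Rightarrow> complex" and w :: "nat \<Rightarrow> nat \<Rightarrow> complex"
  assumes n: "n > 0" and a: "\<And>k. k < n \<Longrightarrow> cmod (a k) = 1" and b: "\<And>k. k < n \<Longrightarrow> cmod (b k) = 1"
    and Q: "Qcond n a b w"
  shows "Rcond n a b w"
proof -
  have Qd: "(\<Sum>k<n. complex_of_real ((cmod (w k s))^2) * cnj (a k)^j' * a k^j) = (if j = j' then 1 else 0)"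
    if "j < n" "j' < n" "s < n" for j j' s
  proof -
    have "(\<Sum>k<n. cnj (w k s) * w k s * cnj (a k)^j' * a k^j) * Ssum n b s s = (if j = j' \<and> s = s then of_nat n else 0)"
      using Q that unfolding Qcond_def by blast
    hence "(\<Sum>k<n. cnj (w k s) * w k s * cnj (a k)^j' * a k^j) * of_nat n = (if j = j' then of_nat n else 0)"
      using Ssum_diag[of b s n, OF b[OF that(3)]] by simp
    moreover have "(\<Sum>k<n. cnj (w k s) * w k s * cnj (a k)^j' * a k^j) = (\<Sum>k<n. complex_of_real ((cmod (w k s))^2) * cnj (a k)^j' * a k^j)"
      by (rule sum.cong, simp, metis complex_norm_square mult.commute of_real_power)
    ultimately show ?thesis using n by (auto split: if_splits)
  qed
  have w: "(cmod (w k s))^2 = 1 / real n" if "k < n" "s < n" for k s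
  proof -
    have H: "\<And>j j'. j<n \<Longrightarrow> j'<n \<Longrightarrow> (\<Sum>k<n. complex_of_real ((cmod (w k s))^2) * cnj (a k)^j' * a k^j) = (if j = j' then 1 else 0)"
      using Qd that(2) by auto
    have "complex_of_real ((cmod (w k s))^2) = 1 / of_nat n"
      by (rule vander(1)[OF n a H that(1)])
    thus ?thesis by (metis of_real_eq_iff of_real_divide of_real_1 of_real_of_nat_eq)
  qed
  have orth: "(\<Sum>j<n. cnj (a k)^j * a l^j) = 0" if "k < n" "l < n" "k \<noteq> l" for k l
  proof -
    have H: "\<And>j j'. j<n \<Longrightarrow> j'<n \<Longrightarrow> (\<Sum>k<n. complex_of_real ((cmod (w k 0))^2) * cnj (a k)^j' * a k^j) = (if j = j' then 1 else 0)"
      using Qd n by auto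
    show ?thesis by (rule vander(2)[OF n a H that])
  qed
  have ainj: "inj_on a {..<n}"
  proof (rule inj_onI, rule ccontr)
    fix k l assume kl: "k \<in> {..<n}" "l \<in> {..<n}" "a k = a l" "k \<noteq> l"
    hence "(\<Sum>j<n. cnj (a k)^j * a l^j) = of_nat n" using sum_pow_cnj_self[OF a] by auto
    thus False using orth[of k l] kl n by auto
  qed
  have unit_pow: "z ^ m * cnj z ^ m = 1" if "cmod z = 1" for z :: complex and m
    using cnj_unit'[OF that] by (simp flip: power_mult_distrib)
  have geq: "y ^ n = x ^ n"
    if x: "cmod x = 1" and y: "cmod y = 1" and ne: "x \<noteq> y" and s0: "(\<Sum>i<n. (cnj x * y)^i) = 0" for x y :: complex
  proof -
    have "cnj x * y \<noteq> 1"
    proof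
      assume "cnj x * y = 1"
      hence "x * (cnj x * y) = x" by simp
      hence "y = x" using cnj_unit'[OF x] by (simp add: mult.assoc[symmetric])
      thus False using ne by simp
    qed
    hence "(cnj x * y)^n = 1" using geom_sum_zero s0 by blast
    hence "x^n * (cnj x ^ n * y ^ n) = x ^ n" by (simp add: power_mult_distrib)
    thus ?thesis using unit_pow[OF x] by (simp add: mult.assoc[symmetric])
  qed
  have apow: "a k ^ n = a l ^ n" if "k < n" "l < n" for k l
  proof (cases "k = l")
    case False
    have "a k \<noteq> a l" using ainj that False by (auto dest: inj_onD)
    moreover have "(\<Sum>i<n. (cnj (a k) * a l)^i) = 0" using orth[OF that False] by (simp add: power_mult_distrib)
    ultimately show ?thesis using geq a that by metis
  qed simp
  have S0: "Ssum n b s t = 0" if st: "s < n" "t < n" "s \<noteq> t" for s t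
  proof (rule ccontr)
    assume S: "Ssum n b s t \<noteq> 0"
    define c where "c = (\<lambda>k. cnj (w k s) * w k t)"
    have lin: "(\<Sum>k<n. c k * a k ^ j) = 0" if j: "j < n" for j
    proof -
      have "(\<Sum>k<n. cnj (w k s) * w k t * cnj (a k)^0 * a k^j) * Ssum n b s t = (if j = 0 \<and> s = t then of_nat n else 0)"
        using Q j st n unfolding Qcond_def by blast
      hence "(\<Sum>k<n. cnj (w k s) * w k t * cnj (a k)^0 * a k^j) * Ssum n b s t = 0" using st by simp
      thus ?thesis using S unfolding c_def by simp
    qed
    have "c l = 0" if l: "l < n" for l
    proof -
      have "0 = (\<Sum>j<n. cnj (a l)^j * (\<Sum>k<n. c k * a k ^ j))" using lin by simp
      also have "\<dots> = (\<Sum>j<n. \<Sum>k<n. c k * (cnj (a l)^j * a k^j))"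
        by (simp add: sum_distrib_left mult_ac)
      also have "\<dots> = (\<Sum>k<n. \<Sum>j<n. c k * (cnj (a l)^j * a k^j))" by (rule sum.swap)
      also have "\<dots> = (\<Sum>k<n. c k * (\<Sum>j<n. cnj (a l)^j * a k ^ j))"
        by (simp add: sum_distrib_left)
      also have "\<dots> = (\<Sum>k<n. if k = l then c k * of_nat n else 0)"
        by (rule sum.cong, simp, auto simp: orth l sum_pow_cnj_self[OF a[OF l]])
      also have "\<dots> = c l * of_nat n" using l by simp
      finally show ?thesis using n by simp
    qed
    hence "c 0 = 0" using n by simp
    hence "w 0 s = 0 \<or> w 0 t = 0" unfolding c_def by simp
    thus False using w[of 0 s] w[of 0 t] st n by auto
  qed
  have binj: "inj_on b {..<n}"
  proof (rule inj_onI, rule ccontr)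
    fix s t assume st: "s \<in> {..<n}" "t \<in> {..<n}" "b s = b t" "s \<noteq> t"
    have "Ssum n b s t = Ssum n b s s" using st(3) unfolding Ssum_def by simp
    moreover have "Ssum n b s s = of_nat n" using st(1) by (intro Ssum_diag b) simp
    ultimately have "Ssum n b s t = of_nat n" by simp
    thus False using S0[of s t] st n by auto
  qed
  have bpow: "b s ^ n = b t ^ n" if "s < n" "t < n" for s t
  proof (cases "s = t")
    case False
    have "b s \<noteq> b t" using binj that False by (auto dest: inj_onD)
    moreover have "(\<Sum>i<n. (cnj (b s) * b t)^i) = 0" using S0[OF that False] unfolding Ssum_def .
    ultimately show ?thesis using geq b that by metis
  qed simp
  have 1: "\<forall>k<n. \<forall>l<n. a k^n = a l^n" using apow by blast
  have 2: "\<forall>k<n. \<forall>l<n. b k^n = b l^n" using bpow by blast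
  have 3: "\<forall>k<n. \<forall>s<n. (cmod (w k s))^2 = 1 / real n" using w by blast
  show ?thesis unfolding Rcond_def using ainj binj 1 2 3 by blast
qed


lemma unit_pow: "cmod z = 1 \<Longrightarrow> cnj z ^ m * z ^ m = 1"
  using cnj_unit by (simp flip: power_mult_distrib)

lemma R_imp_Q:
  fixes a b :: "nat \<Rightarrow> complex" and w :: "nat \<Rightarrow> nat \<Rightarrow> complex"
  assumes n: "n > 0" and a: "\<And>k. k < n \<Longrightarrow> cmod (a k) = 1" and b: "\<And>k. k < n \<Longrightarrow> cmod (b k) = 1"
    and R: "Rcond n a b w"
  shows "Qcond n a b w"
proof -
  have ainj: "inj_on a {..<n}" and binj: "inj_on b {..<n}" and apow: "\<And>k l. k<n \<Longrightarrow> l<n \<Longrightarrow> a k^n = a l^n"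
    and bpow: "\<And>k l. k<n \<Longrightarrow> l<n \<Longrightarrow> b k^n = b l^n"
    and w: "\<And>k s. k<n \<Longrightarrow> s<n \<Longrightarrow> (cmod (w k s))^2 = 1 / real n"
    using R unfolding Rcond_def by blast+
  have rs: "(\<Sum>k<n. a k ^ d) = 0" if d: "0 < d" "d < n" for d
  proof (rule root_sum[OF ainj _ _ d])
    show "\<And>k. k < n \<Longrightarrow> a k ^ n = a 0 ^ n" by (rule apow) (use n in auto)
    show "a 0 ^ n \<noteq> 0" using a[of 0] n by auto
  qed
  have S0: "Ssum n b s t = 0" if st: "s < n" "t < n" "s \<noteq> t" for s t
  proof -
    have ne: "cnj (b s) * b t \<noteq> 1"
    proof
      assume "cnj (b s) * b t = 1"
      hence "b s * (cnj (b s) * b t) = b s" by simp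
      hence "b t = b s" using cnj_unit'[OF b[OF st(1)]] by (simp add: mult.assoc[symmetric])
      thus False using binj st by (auto dest: inj_onD)
    qed
    have "(cnj (b s) * b t)^n = cnj (b s)^n * b s ^ n" using bpow[OF st(2,1)] by (simp add: power_mult_distrib)
    also have "\<dots> = 1" using unit_pow[OF b[OF st(1)]] .
    finally show ?thesis unfolding Ssum_def using geom_sum_zero[OF ne] by simp
  qed
  have ww: "cnj (w k s) * w k s = 1 / of_nat n" if "k < n" "s < n" for k s
  proof -
    have "cnj (w k s) * w k s = complex_of_real ((cmod (w k s))^2)"
      by (metis complex_norm_square mult.commute of_real_power)
    also have "\<dots> = 1 / of_nat n" using w[OF that] by simp
    finally show ?thesis .
  qed
  show ?thesis unfolding Qcond_def
  proof (intro allI impI)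
    fix j j' s t assume jj: "j < n" "j' < n" "s < n" "t < n"
    show "(\<Sum>k<n. cnj (w k s) * w k t * cnj (a k)^j' * a k^j) * Ssum n b s t = (if j = j' \<and> s = t then of_nat n else 0)"
    proof (cases "s = t")
      case False
      then show ?thesis using S0 jj by simp
    next
      case True
      have Sd: "Ssum n b s t = of_nat n" unfolding True by (rule Ssum_diag, rule b, use jj True in simp)
      have e1: "(\<Sum>k<n. cnj (w k s) * w k t * cnj (a k)^j' * a k^j) = (\<Sum>k<n. cnj (a k)^j' * a k^j) / of_nat n"
        unfolding True sum_divide_distrib by (rule sum.cong, simp, simp add: ww jj True)
      show ?thesis
      proof (cases "j = j'")
        case True
        have "(\<Sum>k<n. cnj (a k)^j' * a k^j) = of_nat n" unfolding True
          by (simp add: unit_pow a)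
        thus ?thesis using e1 Sd True \<open>s = t\<close> n by simp
      next
        case False
        have "(\<Sum>k<n. cnj (a k)^j' * a k^j) = 0"
        proof (cases "j' < j")
          case True
          have "(\<Sum>k<n. cnj (a k)^j' * a k^j) = (\<Sum>k<n. a k ^ (j - j'))"
          proof (rule sum.cong, simp)
            fix k assume "k \<in> {..<n}"
            hence k: "k < n" by simp
            have "a k ^ j = a k ^ j' * a k ^ (j - j')" using True by (simp flip: power_add)
            thus "cnj (a k)^j' * a k^j = a k ^ (j - j')" using unit_pow[OF a[OF k], of j'] by (simp add: mult.assoc[symmetric])
          qed
          also have "\<dots> = 0" by (rule rs, use True jj in auto)
          finally show ?thesis .
        next
          case False
          hence lt: "j < j'" using \<open>j \<noteq> j'\<close> by simp
          have "(\<Sum>k<n. cnj (a k)^j' * a k^j) = cnj (\<Sum>k<n. a k ^ (j' - j))"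
            unfolding cnj_sum
          proof (rule sum.cong, simp)
            fix k assume "k \<in> {..<n}"
            hence k: "k < n" by simp
            have "cnj (a k) ^ j' = cnj (a k) ^ (j' - j) * cnj (a k) ^ j" using lt by (simp flip: power_add)
            thus "cnj (a k)^j' * a k^j = cnj (a k ^ (j' - j))" using unit_pow[OF a[OF k], of j]
              by (simp add: mult.assoc)
          qed
          also have "\<dots> = 0" using rs[of "j' - j"] lt jj by simp
          finally show ?thesis .
        qed
        thus ?thesis using e1 False by simp
      qed
    qed
  qed
qed

lemma Q_iff_R:
  fixes a b :: "nat \<Rightarrow> complex" and w :: "nat \<Rightarrow> nat \<Rightarrow> complex"
  assumes n: "n > 0" and a: "\<And>k. k < n \<Longrightarrow> cmod (a k) = 1" and b: "\<And>k. k < n \<Longrightarrow> cmod (b k) = 1"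
  shows "Qcond n a b w \<longleftrightarrow> Rcond n a b w"
  using Q_imp_R[of n a b w] R_imp_Q[of n a b w] n a b by blast


lemma sum_split_sq: "(\<Sum>r<n*n. f r) = (\<Sum>i<n. \<Sum>l<n. (f :: nat \<Rightarrow> complex) (i*n+l))"
proof -
  have "(\<Sum>r<n*n. f r) = (\<Sum>i<n. sum f {i*n..<i*n+n})" using sum.nat_group[of f n n] by simp
  also have "\<dots> = (\<Sum>i<n. \<Sum>l<n. f (i*n+l))"
  proof (rule sum.cong, simp)
    fix i
    have "sum f {i*n..<i*n+n} = sum f {0 + i*n..<n + i*n}" by (simp add: add.commute)
    also have "\<dots> = (\<Sum>l=0..<n. f (l + i*n))" by (rule sum.shift_bounds_nat_ivl)
    finally show "sum f {i*n..<i*n+n} = (\<Sum>l<n. f (i*n+l))" by (simp add: lessThan_atLeast0 add.commute)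
  qed
  finally show ?thesis .
qed

lemma Mblock_carrier: "Mblock n A B \<in> carrier_mat (n*n) (n*n)"
  unfolding Mblock_def by auto

lemma G_entry:
  assumes A: "A \<in> carrier_mat n n" and B: "B \<in> carrier_mat n n"
    and c: "c' < n*n" "c < n*n"
  shows "(adj (Mblock n A B) * Mblock n A B) $$ (c',c) =
    (\<Sum>i<n. (adj (A ^\<^sub>m (c' div n) * B ^\<^sub>m i) * (A ^\<^sub>m (c div n) * B ^\<^sub>m i)) $$ (c' mod n, c mod n))"
proof -
  let ?M = "Mblock n A B"
  have n: "n > 0" using c by (cases n, auto)
  have Mi: "?M $$ (r, d) = (A ^\<^sub>m (d div n) * B ^\<^sub>m (r div n)) $$ (r mod n, d mod n)" if "r < n*n" "d < n*n" for r d
    using that unfolding Mblock_def by auto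
  have "(adj ?M * ?M) $$ (c',c) = (\<Sum>r<n*n. cnj (?M $$ (r,c')) * ?M $$ (r,c))"
    by (rule adj_mult_index[OF Mblock_carrier Mblock_carrier c])
  also have "\<dots> = (\<Sum>i<n. \<Sum>l<n. cnj (?M $$ (i*n+l,c')) * ?M $$ (i*n+l,c))" by (rule sum_split_sq)
  also have "\<dots> = (\<Sum>i<n. (adj (A ^\<^sub>m (c' div n) * B ^\<^sub>m i) * (A ^\<^sub>m (c div n) * B ^\<^sub>m i)) $$ (c' mod n, c mod n))"
  proof (rule sum.cong, simp)
    fix i assume "i \<in> {..<n}"
    hence i: "i < n" by simp
    have lt: "i*n + l < n*n" if "l < n" for l
    proof -
      have "i*n + l < i*n + n" using that by simp
      also have "\<dots> = Suc i * n" by simp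
      also have "\<dots> \<le> n * n" using i by (intro mult_right_mono) auto
      finally show ?thesis .
    qed
    have P1: "A ^\<^sub>m (c' div n) * B ^\<^sub>m i \<in> carrier_mat n n" and P2: "A ^\<^sub>m (c div n) * B ^\<^sub>m i \<in> carrier_mat n n"
      using A B by auto
    have m: "c' mod n < n" "c mod n < n" using n by auto
    have "(\<Sum>l<n. cnj (?M $$ (i*n+l,c')) * ?M $$ (i*n+l,c)) =
      (\<Sum>l<n. cnj ((A ^\<^sub>m (c' div n) * B ^\<^sub>m i) $$ (l, c' mod n)) * (A ^\<^sub>m (c div n) * B ^\<^sub>m i) $$ (l, c mod n))"
      by (rule sum.cong, simp, simp add: Mi lt c)
    also have "\<dots> = (adj (A ^\<^sub>m (c' div n) * B ^\<^sub>m i) * (A ^\<^sub>m (c div n) * B ^\<^sub>m i)) $$ (c' mod n, c mod n)"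
      by (rule adj_mult_index[symmetric, OF P1 P2 m])
    finally show "(\<Sum>l<n. cnj (?M $$ (i*n+l,c')) * ?M $$ (i*n+l,c)) = \<dots>" .
  qed
  finally show ?thesis .
qed

lemma unitary_pow: "unitary_mat n A \<Longrightarrow> unitary_mat n (A ^\<^sub>m j)"
proof (induction j)
  case 0 then show ?case by (auto simp add: unitary_mat_def)
next
  case (Suc j) then show ?case using unitary_mult by simp
qed

lemma G_diag:
  assumes A: "unitary_mat n A" and B: "unitary_mat n B" and c: "c < n*n"
  shows "(adj (Mblock n A B) * Mblock n A B) $$ (c,c) = of_nat n"
proof -
  have Ac: "A \<in> carrier_mat n n" and Bc: "B \<in> carrier_mat n n" using A B unitary_carrier by auto
  have n: "n > 0" using c by (cases n, auto)
  have "(adj (Mblock n A B) * Mblock n A B) $$ (c,c) = (\<Sum>i<n. (adj (A ^\<^sub>m (c div n) * B ^\<^sub>m i) * (A ^\<^sub>m (c div n) * B ^\<^sub>m i)) $$ (c mod n, c mod n))"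
    by (rule G_entry[OF Ac Bc c c])
  also have "\<dots> = (\<Sum>i<n. 1)"
  proof (rule sum.cong, simp)
    fix i
    have "unitary_mat n (A ^\<^sub>m (c div n) * B ^\<^sub>m i)" by (intro unitary_mult unitary_pow A B)
    thus "(adj (A ^\<^sub>m (c div n) * B ^\<^sub>m i) * (A ^\<^sub>m (c div n) * B ^\<^sub>m i)) $$ (c mod n, c mod n) = 1"
      unfolding unitary_mat_def using n by simp
  qed
  finally show ?thesis by simp
qed


lemma pow_UDU: assumes U: "unitary_mat n U"
  shows "(U * dmat n d * adj U) ^\<^sub>m j = U * dmat n (\<lambda>k. d k ^ j) * adj U"
proof (induction j)
  case 0
  have Uc: "U \<in> carrier_mat n n" using U unitary_carrier by auto
  have "U * dmat n (\<lambda>k. d k ^ 0) * adj U = U * adj U" using Uc by (simp add: dmat_one)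
  then show ?case using U Uc unfolding unitary_mat_def by simp
next
  case (Suc j)
  have Uc: "U \<in> carrier_mat n n" using U unitary_carrier by auto
  have "(U * dmat n d * adj U) ^\<^sub>m Suc j = U * dmat n (\<lambda>k. d k ^ j) * adj U * (U * dmat n d * adj U)"
    using Suc by simp
  also have "\<dots> = U * (dmat n (\<lambda>k. d k ^ j) * (adj U * (U * (dmat n d * adj U))))"
    using Uc by (simp add: assoc_mult_mat[of _ n n _ n _ n] mult_carrier_mat[of _ n n _ n])
  also have "adj U * (U * (dmat n d * adj U)) = dmat n d * adj U"
    by (rule unitary_cancel1[OF U], use Uc in auto)
  also have "dmat n (\<lambda>k. d k ^ j) * (dmat n d * adj U) = dmat n (\<lambda>k. d k ^ Suc j) * adj U"
    using Uc by (simp add: assoc_mult_mat[symmetric, of _ n n _ n _ n] dmat_mult mult.commute)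
  finally show ?case using Uc by (simp add: assoc_mult_mat[of _ n n _ n _ n])
qed

lemma dmat_mult_assoc: "X \<in> carrier_mat n k \<Longrightarrow> dmat n d * (dmat n e * X) = dmat n (\<lambda>i. d i * e i) * X"
  by (simp add: assoc_mult_mat[symmetric, of _ n n _ n _ k] dmat_mult)

lemma dmat_mult_index: assumes "X \<in> carrier_mat n m" "s < n" "t < m"
  shows "(dmat n p * X) $$ (s,t) = p s * X $$ (s,t)"
proof -
  have "(dmat n p * X) $$ (s,t) = (\<Sum>k<n. dmat n p $$ (s,k) * X $$ (k,t))"
    by (rule mult_index'[OF _ assms(1) assms(2,3)], simp)
  also have "\<dots> = (\<Sum>k<n. if s = k then p s * X $$ (k,t) else 0)"
    by (rule sum.cong, auto simp: assms)
  also have "\<dots> = p s * X $$ (s,t)" using assms by (simp add: sum.delta)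
  finally show ?thesis .
qed

lemma VZV_index: assumes V: "V \<in> carrier_mat n n" and Z: "Z \<in> carrier_mat n n" and xy: "x < n" "y < n"
  shows "(V * Z * adj V) $$ (x,y) = (\<Sum>s<n. \<Sum>t<n. V $$ (x,s) * Z $$ (s,t) * cnj (V $$ (y,t)))"
proof -
  have "(V * Z * adj V) $$ (x,y) = (\<Sum>t<n. (V * Z) $$ (x,t) * cnj (V $$ (y,t)))"
    by (rule mult_adj_index[OF _ V xy], use V Z in auto)
  also have "\<dots> = (\<Sum>t<n. \<Sum>s<n. V $$ (x,s) * Z $$ (s,t) * cnj (V $$ (y,t)))"
    by (rule sum.cong, simp, subst mult_index'[OF V Z xy(1)], auto simp: sum_distrib_right)
  also have "\<dots> = (\<Sum>s<n. \<Sum>t<n. V $$ (x,s) * Z $$ (s,t) * cnj (V $$ (y,t)))" by (rule sum.swap)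
  finally show ?thesis .
qed

lemma conj_const: assumes V: "unitary_mat n V"
  shows "V * dmat n (\<lambda>_. x) * adj V = dmat n (\<lambda>_. x)"
proof -
  have Vc: "V \<in> carrier_mat n n" using V unitary_carrier by auto
  show ?thesis
  proof (rule eq_matI)
    fix i j assume "i < dim_row (dmat n (\<lambda>_. x))" "j < dim_col (dmat n (\<lambda>_. x))"
    hence ij: "i < n" "j < n" by auto
    have "(V * dmat n (\<lambda>_. x) * adj V) $$ (i,j) = x * (\<Sum>k<n. V $$ (i,k) * cnj (V $$ (j,k)))"
      unfolding UDU_index[OF Vc ij] sum_distrib_left by (rule sum.cong, auto)
    also have "(\<Sum>k<n. V $$ (i,k) * cnj (V $$ (j,k))) = (V * adj V) $$ (i,j)"
      by (rule mult_adj_index[symmetric, OF Vc Vc ij])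
    finally show "(V * dmat n (\<lambda>_. x) * adj V) $$ (i,j) = dmat n (\<lambda>_. x) $$ (i,j)"
      using V ij unfolding unitary_mat_def by auto
  qed (use Vc in auto)
qed

context
  fixes n :: nat and U V :: "complex mat" and a b :: "nat \<Rightarrow> complex"
  assumes U: "unitary_mat n U" and V: "unitary_mat n V"
begin

definition "Wm = adj U * V"

definition "Zi j' j i = dmat n (\<lambda>s. cnj (b s)^i) *
  (adj Wm * (dmat n (\<lambda>k. cnj (a k)^j' * a k^j) * (Wm * dmat n (\<lambda>s. b s^i))))"

definition "ZQ j' j = mat n n (\<lambda>(s,t). (\<Sum>k<n. cnj (Wm $$ (k,s)) * Wm $$ (k,t) * cnj (a k)^j' * a k^j) * Ssum n b s t)"

lemma Uc: "U \<in> carrier_mat n n" using U unitary_carrier by auto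
lemma Vc: "V \<in> carrier_mat n n" using V unitary_carrier by auto
lemma Wc: "Wm \<in> carrier_mat n n" unfolding Wm_def using Uc Vc by auto

lemma block_form:
  "adj ((U * dmat n a * adj U) ^\<^sub>m j' * (V * dmat n b * adj V) ^\<^sub>m i) *
   ((U * dmat n a * adj U) ^\<^sub>m j * (V * dmat n b * adj V) ^\<^sub>m i) = V * Zi j' j i * adj V"
proof -
  note c = Uc Vc
  note ca = assoc_mult_mat[of _ n n _ n _ n] mult_carrier_mat[of _ n n _ n] adj_mult[of _ n n _ n]
  have cU1: "\<And>X. X \<in> carrier_mat n n \<Longrightarrow> adj U * (U * X) = X" by (rule unitary_cancel1[OF U])
  have dA: "\<And>d e X. X \<in> carrier_mat n n \<Longrightarrow> dmat n d * (dmat n e * X) = dmat n (\<lambda>i. d i * e i) * X"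
    by (rule dmat_mult_assoc)
  show ?thesis unfolding pow_UDU[OF U] pow_UDU[OF V] Zi_def Wm_def
    using c by (simp add: ca cU1 dA adj_dmat)
qed

lemma Zi_index: assumes st: "s < n" "t < n"
  shows "Zi j' j i $$ (s,t) = cnj (b s)^i * b t^i * (\<Sum>k<n. cnj (Wm $$ (k,s)) * Wm $$ (k,t) * cnj (a k)^j' * a k^j)"
proof -
  have c1: "Wm * dmat n (\<lambda>s. b s^i) \<in> carrier_mat n n" using Wc by auto
  have c2: "dmat n (\<lambda>k. cnj (a k)^j' * a k^j) * (Wm * dmat n (\<lambda>s. b s^i)) \<in> carrier_mat n n" using Wc by auto
  have c3: "adj Wm * (dmat n (\<lambda>k. cnj (a k)^j' * a k^j) * (Wm * dmat n (\<lambda>s. b s^i))) \<in> carrier_mat n n" using Wc by auto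
  have "Zi j' j i $$ (s,t) = cnj (b s)^i * (adj Wm * (dmat n (\<lambda>k. cnj (a k)^j' * a k^j) * (Wm * dmat n (\<lambda>s. b s^i)))) $$ (s,t)"
    unfolding Zi_def by (rule dmat_mult_index[OF c3 st])
  also have "(adj Wm * (dmat n (\<lambda>k. cnj (a k)^j' * a k^j) * (Wm * dmat n (\<lambda>s. b s^i)))) $$ (s,t)
    = (\<Sum>k<n. cnj (Wm $$ (k,s)) * (dmat n (\<lambda>k. cnj (a k)^j' * a k^j) * (Wm * dmat n (\<lambda>s. b s^i))) $$ (k,t))"
    by (rule adj_mult_index[OF Wc c2 st])
  also have "\<dots> = (\<Sum>k<n. cnj (Wm $$ (k,s)) * Wm $$ (k,t) * cnj (a k)^j' * a k^j) * b t^i"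
    unfolding sum_distrib_right
  proof (rule sum.cong, simp)
    fix k assume "k \<in> {..<n}"
    hence k: "k < n" by simp
    have "(dmat n (\<lambda>k. cnj (a k)^j' * a k^j) * (Wm * dmat n (\<lambda>s. b s^i))) $$ (k,t)
      = (cnj (a k)^j' * a k^j) * (Wm * dmat n (\<lambda>s. b s^i)) $$ (k,t)" by (rule dmat_mult_index[OF c1 k st(2)])
    also have "(Wm * dmat n (\<lambda>s. b s^i)) $$ (k,t) = Wm $$ (k,t) * b t^i" by (rule mult_dmat_index[OF Wc k st(2)])
    finally show "cnj (Wm $$ (k,s)) * (dmat n (\<lambda>k. cnj (a k)^j' * a k^j) * (Wm * dmat n (\<lambda>s. b s^i))) $$ (k,t)
      = cnj (Wm $$ (k,s)) * Wm $$ (k,t) * cnj (a k)^j' * a k^j * b t^i" by (simp add: mult_ac)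
  qed
  finally show ?thesis by (simp add: mult_ac)
qed

lemma G_ZQ:
  assumes c: "c' < n*n" "c < n*n"
  shows "(adj (Mblock n (U * dmat n a * adj U) (V * dmat n b * adj V)) * Mblock n (U * dmat n a * adj U) (V * dmat n b * adj V)) $$ (c',c)
    = (V * ZQ (c' div n) (c div n) * adj V) $$ (c' mod n, c mod n)"
proof -
  have n: "n > 0" using c by (cases n, auto)
  define j' where "j' = c' div n"
  define j where "j = c div n"
  define x where "x = c' mod n"
  define y where "y = c mod n"
  have xy: "x < n" "y < n" unfolding x_def y_def using n by auto
  have Ac: "U * dmat n a * adj U \<in> carrier_mat n n" using Uc by auto
  have Bc: "V * dmat n b * adj V \<in> carrier_mat n n" using Vc by auto
  have Zc: "Zi j' j i \<in> carrier_mat n n" for i unfolding Zi_def using Wc by auto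
  have ZQc: "ZQ j' j \<in> carrier_mat n n" unfolding ZQ_def by auto
  have "(adj (Mblock n (U * dmat n a * adj U) (V * dmat n b * adj V)) * Mblock n (U * dmat n a * adj U) (V * dmat n b * adj V)) $$ (c',c)
    = (\<Sum>i<n. (V * Zi j' j i * adj V) $$ (x,y))"
    unfolding G_entry[OF Ac Bc c] block_form j'_def j_def x_def y_def ..
  also have "\<dots> = (\<Sum>i<n. \<Sum>s<n. \<Sum>t<n. V $$ (x,s) * Zi j' j i $$ (s,t) * cnj (V $$ (y,t)))"
    by (rule sum.cong, simp, rule VZV_index[OF Vc Zc xy])
  also have "\<dots> = (\<Sum>s<n. \<Sum>t<n. V $$ (x,s) * (\<Sum>i<n. Zi j' j i $$ (s,t)) * cnj (V $$ (y,t)))"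
  proof -
    have "(\<Sum>i<n. \<Sum>s<n. \<Sum>t<n. V $$ (x,s) * Zi j' j i $$ (s,t) * cnj (V $$ (y,t)))
      = (\<Sum>s<n. \<Sum>i<n. \<Sum>t<n. V $$ (x,s) * Zi j' j i $$ (s,t) * cnj (V $$ (y,t)))" by (rule sum.swap)
    also have "\<dots> = (\<Sum>s<n. \<Sum>t<n. \<Sum>i<n. V $$ (x,s) * Zi j' j i $$ (s,t) * cnj (V $$ (y,t)))"
      by (rule sum.cong, simp, rule sum.swap)
    also have "\<dots> = (\<Sum>s<n. \<Sum>t<n. V $$ (x,s) * (\<Sum>i<n. Zi j' j i $$ (s,t)) * cnj (V $$ (y,t)))"
      by (simp add: sum_distrib_left sum_distrib_right)
    finally show ?thesis .
  qed
  also have "\<dots> = (\<Sum>s<n. \<Sum>t<n. V $$ (x,s) * ZQ j' j $$ (s,t) * cnj (V $$ (y,t)))"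
  proof (rule sum.cong, simp, rule sum.cong, simp)
    fix s t assume "s \<in> {..<n}" "t \<in> {..<n}"
    hence st: "s < n" "t < n" by auto
    have "(\<Sum>i<n. Zi j' j i $$ (s,t)) = (\<Sum>i<n. (cnj (b s) * b t)^i) * (\<Sum>k<n. cnj (Wm $$ (k,s)) * Wm $$ (k,t) * cnj (a k)^j' * a k^j)"
      unfolding sum_distrib_right by (rule sum.cong, simp, simp add: Zi_index st power_mult_distrib)
    also have "\<dots> = ZQ j' j $$ (s,t)" unfolding ZQ_def Ssum_def using st by simp
    finally show "V $$ (x,s) * (\<Sum>i<n. Zi j' j i $$ (s,t)) * cnj (V $$ (y,t)) = V $$ (x,s) * ZQ j' j $$ (s,t) * cnj (V $$ (y,t))"
      by simp
  qed
  also have "\<dots> = (V * ZQ j' j * adj V) $$ (x,y)" by (rule VZV_index[symmetric, OF Vc ZQc xy])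
  finally show ?thesis unfolding j'_def j_def x_def y_def .
qed

lemma G_iff_Q:
  assumes n: "n > 0"
  shows "adj (Mblock n (U * dmat n a * adj U) (V * dmat n b * adj V)) * Mblock n (U * dmat n a * adj U) (V * dmat n b * adj V)
      = dmat (n*n) (\<lambda>_. of_nat n) \<longleftrightarrow> Qcond n a b (\<lambda>k s. Wm $$ (k,s))"
proof -
  let ?M = "Mblock n (U * dmat n a * adj U) (V * dmat n b * adj V)"
  let ?D = "\<lambda>j' j. dmat n (\<lambda>_. if j' = j then of_nat n else 0 :: complex)"
  have ZQc: "\<And>j' j. ZQ j' j \<in> carrier_mat n n" unfolding ZQ_def by auto
  have idx: "(j'*n + k') div n = j'" "(j'*n+k') mod n = k'" if "k' < n" for j' k' using that by auto
  have lt: "j*n + k < n*n" if "j < n" "k < n" for j k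
  proof -
    have "j*n + k < j*n + n" using that by simp
    also have "\<dots> = Suc j * n" by simp
    also have "\<dots> \<le> n * n" using that by (intro mult_right_mono) auto
    finally show ?thesis .
  qed
  have step1: "adj ?M * ?M = dmat (n*n) (\<lambda>_. of_nat n) \<longleftrightarrow> (\<forall>j'<n. \<forall>j<n. V * ZQ j' j * adj V = ?D j' j)"
  proof
    assume G: "adj ?M * ?M = dmat (n*n) (\<lambda>_. of_nat n)"
    show "\<forall>j'<n. \<forall>j<n. V * ZQ j' j * adj V = ?D j' j"
    proof (intro allI impI eq_matI)
      fix j' j k' k assume jj: "j' < n" "j < n" and kk: "k' < dim_row (?D j' j)" "k < dim_col (?D j' j)"
      hence kk: "k' < n" "k < n" by auto
      have "(V * ZQ j' j * adj V) $$ (k',k) = (adj ?M * ?M) $$ (j'*n+k', j*n+k)"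
        using G_ZQ[OF lt[OF jj(1) kk(1)] lt[OF jj(2) kk(2)]] idx kk by simp
      also have "\<dots> = ?D j' j $$ (k',k)" unfolding G using lt jj kk idx
        by (auto simp: dmat_index) (metis idx)
      finally show "(V * ZQ j' j * adj V) $$ (k',k) = ?D j' j $$ (k',k)" .
    qed (use Vc ZQc in auto)
  next
    assume H: "\<forall>j'<n. \<forall>j<n. V * ZQ j' j * adj V = ?D j' j"
    show "adj ?M * ?M = dmat (n*n) (\<lambda>_. of_nat n)"
    proof (rule eq_matI)
      fix c' c assume "c' < dim_row (dmat (n*n) (\<lambda>_. of_nat n :: complex))" "c < dim_col (dmat (n*n) (\<lambda>_. of_nat n :: complex))"
      hence cc: "c' < n*n" "c < n*n" by auto
      have d: "c' div n < n" "c div n < n" using cc by (auto simp: less_mult_imp_div_less)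
      have m: "c' mod n < n" "c mod n < n" using n by auto
      have "(adj ?M * ?M) $$ (c',c) = ?D (c' div n) (c div n) $$ (c' mod n, c mod n)"
        using G_ZQ[OF cc] H d by simp
      also have "\<dots> = dmat (n*n) (\<lambda>_. of_nat n) $$ (c',c)"
        using m cc by (auto simp: dmat_index) (metis div_mult_mod_eq)+
      finally show "(adj ?M * ?M) $$ (c',c) = dmat (n*n) (\<lambda>_. of_nat n) $$ (c',c)" .
    qed (use Mblock_carrier in auto)
  qed
  have step2: "V * ZQ j' j * adj V = ?D j' j \<longleftrightarrow> ZQ j' j = ?D j' j" for j' j
  proof
    assume "V * ZQ j' j * adj V = ?D j' j"
    hence "adj V * (V * ZQ j' j * adj V) * V = adj V * ?D j' j * V" by simp
    moreover have "adj V * (V * ZQ j' j * adj V) * V = ZQ j' j"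
    proof -
      have "adj V * (V * ZQ j' j * adj V) * V = adj V * (V * (ZQ j' j * (adj V * V)))"
        using Vc ZQc by (simp add: assoc_mult_mat[of _ n n _ n _ n] mult_carrier_mat[of _ n n _ n])
      also have "\<dots> = ZQ j' j" using V ZQc[of j' j] unitary_cancel1[OF V, of "ZQ j' j" n] unfolding unitary_mat_def by simp
      finally show ?thesis .
    qed
    moreover have "adj V * ?D j' j * V = ?D j' j" using conj_const[OF unitary_adj[OF V]] by simp
    ultimately show "ZQ j' j = ?D j' j" by simp
  next
    assume "ZQ j' j = ?D j' j"
    thus "V * ZQ j' j * adj V = ?D j' j" using conj_const[OF V] by simp
  qed
  have step3: "(\<forall>j'<n. \<forall>j<n. ZQ j' j = ?D j' j) \<longleftrightarrow> Qcond n a b (\<lambda>k s. Wm $$ (k,s))"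
  proof
    assume H: "\<forall>j'<n. \<forall>j<n. ZQ j' j = ?D j' j"
    show "Qcond n a b (\<lambda>k s. Wm $$ (k,s))" unfolding Qcond_def
    proof (intro allI impI)
      fix j j' s t assume a: "j < n" "j' < n" "s < n" "t < n"
      have "ZQ j' j $$ (s,t) = ?D j' j $$ (s,t)" using H a by simp
      thus "(\<Sum>k<n. cnj (Wm $$ (k,s)) * Wm $$ (k,t) * cnj (a k)^j' * a k^j) * Ssum n b s t = (if j = j' \<and> s = t then of_nat n else 0)"
        unfolding ZQ_def using a by auto
    qed
  next
    assume Q: "Qcond n a b (\<lambda>k s. Wm $$ (k,s))"
    show "\<forall>j'<n. \<forall>j<n. ZQ j' j = ?D j' j"
    proof (intro allI impI eq_matI)
      fix j' j s t assume a: "j' < n" "j < n" "s < dim_row (?D j' j)" "t < dim_col (?D j' j)"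
      hence a: "j' < n" "j < n" "s < n" "t < n" by auto
      have "(\<Sum>k<n. cnj (Wm $$ (k,s)) * Wm $$ (k,t) * cnj (a k)^j' * a k^j) * Ssum n b s t = (if j = j' \<and> s = t then of_nat n else 0)"
        using Q a unfolding Qcond_def by blast
      thus "ZQ j' j $$ (s,t) = ?D j' j $$ (s,t)" unfolding ZQ_def using a by auto
    qed (auto simp: ZQ_def)
  qed
  show ?thesis using step1 step2 step3 by simp
qed

end


lemma unconj: assumes U: "unitary_mat n U" and X: "X \<in> carrier_mat n n"
  shows "adj U * (U * X * adj U) * U = X"
proof -
  have Uc: "U \<in> carrier_mat n n" using U unitary_carrier by auto
  have "adj U * (U * X * adj U) * U = adj U * (U * (X * (adj U * U)))"
    using Uc X by (simp add: assoc_mult_mat[of _ n n _ n _ n] mult_carrier_mat[of _ n n _ n])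
  also have "\<dots> = X" using U X unitary_cancel1[OF U, of X n] unfolding unitary_mat_def by simp
  finally show ?thesis .
qed

lemma adj_UDU: assumes Uc: "U \<in> carrier_mat n n"
  shows "adj (U * dmat n d * adj U) = U * dmat n (\<lambda>k. cnj (d k)) * adj U"
proof -
  have "adj (U * dmat n d * adj U) = adj (adj U) * adj (U * dmat n d)"
    by (rule adj_mult[of _ n n _ n], use Uc in auto)
  also have "adj (U * dmat n d) = adj (dmat n d) * adj U" by (rule adj_mult[OF Uc dmat_carrier])
  finally show ?thesis using Uc by (simp add: adj_dmat assoc_mult_mat[of _ n n _ n _ n])
qed

lemma dmat_eq_index: "dmat n d = dmat n e \<Longrightarrow> k < n \<Longrightarrow> d k = e k"
  by (metis dmat_index)

lemma unit_eigs: assumes A: "unitary_mat n A" and U: "unitary_mat n U" and Aeq: "A = U * dmat n a * adj U"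
  and k: "k < n" shows "cmod (a k) = 1"
proof -
  have Uc: "U \<in> carrier_mat n n" using U unitary_carrier by auto
  have cU1: "\<And>X. X \<in> carrier_mat n n \<Longrightarrow> adj U * (U * X) = X" by (rule unitary_cancel1[OF U])
  have dA: "\<And>d e X. X \<in> carrier_mat n n \<Longrightarrow> dmat n d * (dmat n e * X) = dmat n (\<lambda>i. d i * e i) * X"
    by (rule dmat_mult_assoc)
  have "adj A * A = U * dmat n (\<lambda>k. cnj (a k) * a k) * adj U"
    unfolding Aeq adj_UDU[OF Uc] using Uc
    by (simp add: assoc_mult_mat[of _ n n _ n _ n] mult_carrier_mat[of _ n n _ n] cU1 dA)
  hence e: "U * dmat n (\<lambda>k. cnj (a k) * a k) * adj U = 1\<^sub>m n" using A unfolding unitary_mat_def by simp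
  have "dmat n (\<lambda>k. cnj (a k) * a k) = adj U * (U * dmat n (\<lambda>k. cnj (a k) * a k) * adj U) * U"
    using unconj[OF U, of "dmat n (\<lambda>k. cnj (a k) * a k)"] by simp
  also have "\<dots> = adj U * U" unfolding e using Uc by simp
  also have "\<dots> = dmat n (\<lambda>_. 1)" using U unfolding unitary_mat_def by (simp add: dmat_one)
  finally have "dmat n (\<lambda>k. cnj (a k) * a k) = dmat n (\<lambda>_. 1)" .
  hence "cnj (a k) * a k = 1" using dmat_eq_index k by fastforce
  hence "(complex_of_real (cmod (a k)))^2 = 1" using complex_norm_square[of "a k"] by (simp add: mult.commute)
  hence "(cmod (a k))^2 = 1" by (metis of_real_eq_1_iff of_real_power)
  thus ?thesis using norm_ge_zero[of "a k"] by (auto simp add: power2_eq_1_iff)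
qed

lemma simple_iff: assumes U: "unitary_mat n U" and Aeq: "A = U * dmat n a * adj U"
  shows "simple_spectrum A \<longleftrightarrow> inj_on a {..<n}"
proof -
  have Uc: "U \<in> carrier_mat n n" using U unitary_carrier by auto
  have Ac: "A \<in> carrier_mat n n" unfolding Aeq using Uc by auto
  have "similar_mat A (dmat n a)"
    by (rule similar_matI[where n=n and P=U and Q="adj U"], use Uc Ac Aeq U in \<open>auto simp: unitary_mat_def\<close>)
  hence "char_poly A = char_poly (dmat n a)" by (rule char_poly_similar)
  also have "\<dots> = (\<Prod>x\<leftarrow>diag_mat (dmat n a). [:- x, 1:])"
    by (rule char_poly_upper_triangular[of _ n], auto simp: upper_triangular_def)
  also have "diag_mat (dmat n a) = map a [0..<n]" by (auto simp: diag_mat_def intro!: nth_equalityI)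
  finally have cp: "char_poly A = prod_list (map (\<lambda>k. [:- a k, 1:]) [0..<n])" by (simp add: o_def)
  have ord: "order e (char_poly A) = (\<Sum>k<n. if a k = e then 1 else 0)" for e
  proof -
    have "order e (char_poly A) = sum_list (map (order e) (map (\<lambda>k. [:- a k, 1:]) [0..<n]))"
      unfolding cp by (rule order_prod_list, auto)
    also have "\<dots> = (\<Sum>k\<leftarrow>[0..<n]. if a k = e then 1 else 0)"
      by (simp add: o_def order_linear')
    also have "\<dots> = (\<Sum>k<n. if a k = e then 1 else 0)"
      by (simp add: sum_list_distinct_conv_sum_set atLeast0LessThan)
    finally show ?thesis .
  qed
  show ?thesis unfolding simple_spectrum_def ord
  proof
    assume H: "\<forall>e. (\<Sum>k<n. if a k = e then 1 else 0 :: nat) \<le> 1"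
    show "inj_on a {..<n}"
    proof (rule inj_onI, rule ccontr)
      fix k l assume kl: "k \<in> {..<n}" "l \<in> {..<n}" "a k = a l" "k \<noteq> l"
      have "(\<Sum>i\<in>{k,l}. if a i = a k then 1 else 0 :: nat) \<le> (\<Sum>i<n. if a i = a k then 1 else 0)"
        by (rule sum_mono2, use kl in auto)
      also have "\<dots> \<le> 1" using H by blast
      finally show False using kl by simp
    qed
  next
    assume inj: "inj_on a {..<n}"
    show "\<forall>e. (\<Sum>k<n. if a k = e then 1 else 0 :: nat) \<le> 1"
    proof
      fix e
      have "(\<Sum>k<n. if a k = e then 1 else 0 :: nat) = card {k\<in>{..<n}. a k = e}"
        by (simp add: sum.If_cases, intro arg_cong[where f=card], auto)
      also have "\<dots> \<le> 1" using inj by (auto simp: card_le_Suc0_iff_eq dest: inj_onD)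
      finally show "(\<Sum>k<n. if a k = e then 1 else 0 :: nat) \<le> 1" .
    qed
  qed
qed

lemma scalar_iff: assumes n: "n > 0" and U: "unitary_mat n U" and Aeq: "A = U * dmat n a * adj U"
  shows "scalar_mat n (A ^\<^sub>m n) \<longleftrightarrow> (\<forall>k<n. \<forall>l<n. a k^n = a l^n)"
proof -
  have Uc: "U \<in> carrier_mat n n" using U unitary_carrier by auto
  have pw: "A ^\<^sub>m n = U * dmat n (\<lambda>k. a k ^ n) * adj U" unfolding Aeq by (rule pow_UDU[OF U])
  have cd: "c \<cdot>\<^sub>m 1\<^sub>m n = dmat n (\<lambda>_. c)" for c by (rule eq_matI, auto)
  show ?thesis
  proof
    assume "scalar_mat n (A ^\<^sub>m n)"
    then obtain c where c: "A ^\<^sub>m n = dmat n (\<lambda>_. c)" unfolding scalar_mat_def cd by blast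
    have "dmat n (\<lambda>k. a k ^ n) = adj U * (U * dmat n (\<lambda>k. a k ^ n) * adj U) * U"
      using unconj[OF U] by simp
    also have "\<dots> = dmat n (\<lambda>_. c)" unfolding pw[symmetric] c using conj_const[OF unitary_adj[OF U]] by simp
    finally have "\<And>k. k < n \<Longrightarrow> a k ^ n = c" using dmat_eq_index by fastforce
    thus "\<forall>k<n. \<forall>l<n. a k^n = a l^n" by simp
  next
    assume H: "\<forall>k<n. \<forall>l<n. a k^n = a l^n"
    have H0: "\<And>k. k < n \<Longrightarrow> a k ^ n = a 0 ^ n" using H n by blast
    have "dmat n (\<lambda>k. a k ^ n) = dmat n (\<lambda>_. a 0 ^ n)"
    proof (rule eq_matI)
      fix i j assume "i < dim_row (dmat n (\<lambda>_. a 0 ^ n))" "j < dim_col (dmat n (\<lambda>_. a 0 ^ n))"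
      hence ij: "i < n" "j < n" by auto
      show "dmat n (\<lambda>k. a k ^ n) $$ (i,j) = dmat n (\<lambda>_. a 0 ^ n) $$ (i,j)"
        using ij by (simp add: dmat_index; metis H0 ij)
    qed auto
    hence "A ^\<^sub>m n = dmat n (\<lambda>_. a 0 ^ n)" unfolding pw using conj_const[OF U] by simp
    thus "scalar_mat n (A ^\<^sub>m n)" unfolding scalar_mat_def cd by blast
  qed
qed

lemma cinner_cols: assumes "U \<in> carrier_mat n n" "V \<in> carrier_mat n n" "s < n" "t < n"
  shows "cinner n (col U s) (col V t) = (adj U * V) $$ (s,t)"
  unfolding cinner_def using assms by (simp add: adj_mult_index[OF assms])

lemma cols_basis: assumes U: "unitary_mat n U" and Aeq: "A = U * dmat n a * adj U"
  shows "orthonormal_eigenbasis n A (map (col U) [0..<n])"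
proof -
  have Uc: "U \<in> carrier_mat n n" using U unitary_carrier by auto
  have ci: "cinner n (col U s) (col U t) = (if s = t then 1 else 0)" if "s < n" "t < n" for s t
    using cinner_cols[OF Uc Uc that] U that unfolding unitary_mat_def by simp
  have ob: "orthonormal_basis n (map (col U) [0..<n])"
    unfolding orthonormal_basis_def using ci Uc by auto
  have AU: "A * U = U * dmat n a"
  proof -
    have "A * U = U * (dmat n a * (adj U * U))" unfolding Aeq using Uc
      by (simp add: assoc_mult_mat[of _ n n _ n _ n] mult_carrier_mat[of _ n n _ n])
    thus ?thesis using U Uc unfolding unitary_mat_def by simp
  qed
  have ev: "eigenvector A (col U k) (a k)" if k: "k < n" for k
    unfolding eigenvector_def
  proof (intro conjI)
    show "col U k \<in> carrier_vec (dim_row A)" unfolding Aeq using Uc by auto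
    show "col U k \<noteq> 0\<^sub>v (dim_row A)"
    proof
      assume "col U k = 0\<^sub>v (dim_row A)"
      hence "cinner n (col U k) (col U k) = 0" unfolding cinner_def using Uc Aeq by simp
      thus False using ci[OF k k] by simp
    qed
    show "A *\<^sub>v col U k = a k \<cdot>\<^sub>v col U k"
    proof (rule eq_vecI)
      fix i assume "i < dim_vec (a k \<cdot>\<^sub>v col U k)"
      hence i: "i < n" using Uc by auto
      have "(A *\<^sub>v col U k) $ i = (A * U) $$ (i,k)" unfolding Aeq using Uc i k by simp
      also have "\<dots> = U $$ (i,k) * a k" unfolding AU by (rule mult_dmat_index[OF Uc i k])
      finally show "(A *\<^sub>v col U k) $ i = (a k \<cdot>\<^sub>v col U k) $ i" using i k Uc by simp
    qed (use Uc Aeq in auto)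
  qed
  show ?thesis unfolding orthonormal_eigenbasis_def using ob ev by auto
qed

lemma basis_unitary: assumes ob: "orthonormal_eigenbasis n A us" and Ac: "A \<in> carrier_mat n n"
  shows "\<exists>a. unitary_mat n (mat_of_cols n us) \<and> A = mat_of_cols n us * dmat n a * adj (mat_of_cols n us)"
proof -
  let ?Q = "mat_of_cols n us"
  have len: "length us = n" and uc: "\<And>s. s < n \<Longrightarrow> us ! s \<in> carrier_vec n"
    and ci: "\<And>s t. s < n \<Longrightarrow> t < n \<Longrightarrow> cinner n (us ! s) (us ! t) = (if s = t then 1 else 0)"
    and evs: "\<And>s. s < n \<Longrightarrow> \<exists>e. eigenvector A (us ! s) e"
    using ob unfolding orthonormal_eigenbasis_def orthonormal_basis_def by auto
  have Qc: "?Q \<in> carrier_mat n n" using len by auto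
  have Qi: "?Q $$ (i,k) = us ! k $ i" if "i < n" "k < n" for i k using that len by (simp add: mat_of_cols_index)
  have colQ: "col ?Q k = us ! k" if "k < n" for k using that len uc by (auto intro!: eq_vecI simp: Qi)
  have "adj ?Q * ?Q = 1\<^sub>m n"
  proof (rule eq_matI)
    fix s t assume "s < dim_row (1\<^sub>m n)" "t < dim_col (1\<^sub>m n)"
    hence st: "s < n" "t < n" by auto
    have "(adj ?Q * ?Q) $$ (s,t) = cinner n (col ?Q s) (col ?Q t)" using cinner_cols[OF Qc Qc st] by simp
    thus "(adj ?Q * ?Q) $$ (s,t) = 1\<^sub>m n $$ (s,t)" using ci[OF st] colQ st by simp
  qed (use Qc in auto)
  hence Q: "unitary_mat n ?Q" using Qc by (intro unitary_matI) auto
  define a where "a = (\<lambda>k. SOME e. eigenvector A (us ! k) e)"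
  have eva: "eigenvector A (us ! k) (a k)" if "k < n" for k unfolding a_def using evs[OF that] by (rule someI_ex)
  have AQ: "A * ?Q = ?Q * dmat n a"
  proof (rule eq_matI)
    fix i k assume "i < dim_row (?Q * dmat n a)" "k < dim_col (?Q * dmat n a)"
    hence ik: "i < n" "k < n" using Qc by auto
    have "(A * ?Q) $$ (i,k) = row A i \<bullet> col ?Q k" by (rule index_mult_mat, use Ac Qc ik in auto)
    also have "\<dots> = (A *\<^sub>v col ?Q k) $ i" by (rule index_mult_mat_vec[symmetric], use Ac ik in auto)
    also have "\<dots> = (a k \<cdot>\<^sub>v us ! k) $ i" using eva[OF ik(2)] colQ[OF ik(2)] unfolding eigenvector_def by simp
    also have "\<dots> = ?Q $$ (i,k) * a k" using ik uc[OF ik(2)] by (simp add: Qi mult.commute)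
    also have "\<dots> = (?Q * dmat n a) $$ (i,k)" by (rule mult_dmat_index[symmetric, OF Qc ik])
    finally show "(A * ?Q) $$ (i,k) = (?Q * dmat n a) $$ (i,k)" .
  qed (use Ac Qc in auto)
  have "A = A * (?Q * adj ?Q)" using Q Ac unfolding unitary_mat_def by simp
  also have "\<dots> = (A * ?Q) * adj ?Q" using Ac Qc by (simp add: assoc_mult_mat[of _ n n _ n _ n])
  also have "\<dots> = ?Q * dmat n a * adj ?Q" unfolding AQ ..
  finally show ?thesis using Q by blast
qed


lemma G_iff_R:
  assumes n: "n > 0" and U: "unitary_mat n U" and V: "unitary_mat n V"
    and A: "unitary_mat n A" and B: "unitary_mat n B"
    and Aeq: "A = U * dmat n a * adj U" and Beq: "B = V * dmat n b * adj V"
  shows "adj (Mblock n A B) * Mblock n A B = dmat (n*n) (\<lambda>_. of_nat n) \<longleftrightarrow> Rcond n a b (\<lambda>k s. (adj U * V) $$ (k,s))"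
proof -
  have a: "\<And>k. k < n \<Longrightarrow> cmod (a k) = 1" using unit_eigs[OF A U Aeq] by blast
  have b: "\<And>k. k < n \<Longrightarrow> cmod (b k) = 1" using unit_eigs[OF B V Beq] by blast
  show ?thesis unfolding Aeq Beq G_iff_Q[OF U V n] Wm_def[OF U V]
    by (rule Q_iff_R[OF n a b])
qed

theorem mainTheorem8:
  fixes n :: nat and A B :: "complex mat"
  assumes "n \<ge> 1" and "unitary_mat n A" and "unitary_mat n B"
  shows "cmod (Tdet n A B) \<le> real n powr (real (n^2) / 2)
    \<and> (cmod (Tdet n A B) = real n powr (real (n^2) / 2) \<longleftrightarrow>
        simple_spectrum A \<and> simple_spectrum B \<and>
        scalar_mat n (A ^\<^sub>m n) \<and> scalar_mat n (B ^\<^sub>m n) \<and>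
        (\<exists>us vs. orthonormal_eigenbasis n A us \<and> orthonormal_eigenbasis n B vs \<and>
                  mutually_unbiased n us vs))"
proof -
  have n: "n > 0" using assms(1) by simp
  have A: "unitary_mat n A" and B: "unitary_mat n B" by fact+
  have Ac: "A \<in> carrier_mat n n" and Bc: "B \<in> carrier_mat n n" using A B unitary_carrier by auto
  let ?M = "Mblock n A B"
  have diag: "\<And>i. i < n*n \<Longrightarrow> (adj ?M * ?M) $$ (i,i) = complex_of_real (real n)"
    using G_diag[OF A B] by simp
  have rn: "real n > 0" using n by simp
  have H1: "(cmod (det ?M))^2 \<le> real n ^ (n*n)" by (rule hadamard_eq(1)[OF Mblock_carrier rn diag])
  have H2: "(cmod (det ?M))^2 = real n ^ (n*n) \<longleftrightarrow> adj ?M * ?M = dmat (n*n) (\<lambda>_. of_nat n)"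
    using hadamard_eq(2)[OF Mblock_carrier rn diag] by simp
  define y where "y = real n powr (real (n^2) / 2)"
  have y0: "y \<ge> 0" unfolding y_def by simp
  have y2: "y^2 = real n ^ (n*n)"
  proof -
    have "y^2 = real n powr (real 2 * (real (n^2) / 2))" unfolding y_def using rn by (subst powr_power, auto)
    also have "\<dots> = real n powr real (n^2)" by simp
    also have "\<dots> = real n ^ (n^2)" using rn by (rule powr_realpow)
    finally show ?thesis by (simp add: power2_eq_square)
  qed
  have T: "Tdet n A B = det ?M" unfolding Tdet_def ..
  have le: "cmod (Tdet n A B) \<le> y" unfolding T by (rule power2_le_imp_le[OF _ y0], unfold y2, rule H1)
  have eqiff: "cmod (Tdet n A B) = y \<longleftrightarrow> adj ?M * ?M = dmat (n*n) (\<lambda>_. of_nat n)"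
    unfolding T H2[symmetric] y2[symmetric] using power2_eq_iff_nonneg[OF norm_ge_zero[of "det ?M"] y0] by simp
  have nA: "A * adj A = adj A * A" using A unfolding unitary_mat_def by simp
  have nB: "B * adj B = adj B * B" using B unfolding unitary_mat_def by simp
  have main: "adj ?M * ?M = dmat (n*n) (\<lambda>_. of_nat n) \<longleftrightarrow>
        simple_spectrum A \<and> simple_spectrum B \<and>
        scalar_mat n (A ^\<^sub>m n) \<and> scalar_mat n (B ^\<^sub>m n) \<and>
        (\<exists>us vs. orthonormal_eigenbasis n A us \<and> orthonormal_eigenbasis n B vs \<and>
                  mutually_unbiased n us vs)"
  proof
    assume G: "adj ?M * ?M = dmat (n*n) (\<lambda>_. of_nat n)"
    obtain U a where U: "unitary_mat n U" and Aeq: "A = U * dmat n a * adj U"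
      using spectral_normal[OF Ac nA] by blast
    obtain V b where V: "unitary_mat n V" and Beq: "B = V * dmat n b * adj V"
      using spectral_normal[OF Bc nB] by blast
    have Uc: "U \<in> carrier_mat n n" and Vc: "V \<in> carrier_mat n n" using U V unitary_carrier by auto
    have R: "Rcond n a b (\<lambda>k s. (adj U * V) $$ (k,s))" using G G_iff_R[OF n U V A B Aeq Beq] by simp
    have ainj: "inj_on a {..<n}" and binj: "inj_on b {..<n}" and apow: "\<forall>k<n. \<forall>l<n. a k^n = a l^n"
      and bpow: "\<forall>k<n. \<forall>l<n. b k^n = b l^n"
      and w: "\<forall>k<n. \<forall>s<n. (cmod ((adj U * V) $$ (k,s)))^2 = 1 / real n"
      using R unfolding Rcond_def by blast+
    define us where "us = map (col U) [0..<n]"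
    define vs where "vs = map (col V) [0..<n]"
    have eA: "orthonormal_eigenbasis n A us" unfolding us_def by (rule cols_basis[OF U Aeq])
    have eB: "orthonormal_eigenbasis n B vs" unfolding vs_def by (rule cols_basis[OF V Beq])
    have mu: "mutually_unbiased n us vs"
      unfolding mutually_unbiased_def
    proof (intro conjI allI impI)
      show "orthonormal_basis n us" using eA unfolding orthonormal_eigenbasis_def by simp
      show "orthonormal_basis n vs" using eB unfolding orthonormal_eigenbasis_def by simp
      fix s t assume st: "s < n" "t < n"
      have "cinner n (us ! s) (vs ! t) = (adj U * V) $$ (s,t)"
        unfolding us_def vs_def using st by (simp add: cinner_cols[OF Uc Vc st])
      thus "(cmod (cinner n (us ! s) (vs ! t)))^2 = 1 / real n" using w st by simp
    qed
    show "simple_spectrum A \<and> simple_spectrum B \<and>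
        scalar_mat n (A ^\<^sub>m n) \<and> scalar_mat n (B ^\<^sub>m n) \<and>
        (\<exists>us vs. orthonormal_eigenbasis n A us \<and> orthonormal_eigenbasis n B vs \<and>
                  mutually_unbiased n us vs)"
      using simple_iff[OF U Aeq] simple_iff[OF V Beq] scalar_iff[OF n U Aeq] scalar_iff[OF n V Beq]
        ainj binj apow bpow eA eB mu by blast
  next
    assume C: "simple_spectrum A \<and> simple_spectrum B \<and>
        scalar_mat n (A ^\<^sub>m n) \<and> scalar_mat n (B ^\<^sub>m n) \<and>
        (\<exists>us vs. orthonormal_eigenbasis n A us \<and> orthonormal_eigenbasis n B vs \<and>
                  mutually_unbiased n us vs)"
    then obtain us vs where eA: "orthonormal_eigenbasis n A us" and eB: "orthonormal_eigenbasis n B vs"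
      and mu: "mutually_unbiased n us vs" by blast
    obtain a where U: "unitary_mat n (mat_of_cols n us)" and Aeq: "A = mat_of_cols n us * dmat n a * adj (mat_of_cols n us)"
      using basis_unitary[OF eA Ac] by blast
    obtain b where V: "unitary_mat n (mat_of_cols n vs)" and Beq: "B = mat_of_cols n vs * dmat n b * adj (mat_of_cols n vs)"
      using basis_unitary[OF eB Bc] by blast
    let ?U = "mat_of_cols n us" and ?V = "mat_of_cols n vs"
    have Uc: "?U \<in> carrier_mat n n" and Vc: "?V \<in> carrier_mat n n" using U V unitary_carrier by auto
    have lus: "length us = n" and uc: "\<And>s. s < n \<Longrightarrow> us ! s \<in> carrier_vec n"
      using eA unfolding orthonormal_eigenbasis_def orthonormal_basis_def by auto
    have lvs: "length vs = n" and vc: "\<And>s. s < n \<Longrightarrow> vs ! s \<in> carrier_vec n"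
      using eB unfolding orthonormal_eigenbasis_def orthonormal_basis_def by auto
    have w: "\<forall>k<n. \<forall>s<n. (cmod ((adj ?U * ?V) $$ (k,s)))^2 = 1 / real n"
    proof (intro allI impI)
      fix k s assume ks: "k < n" "s < n"
      have "(adj ?U * ?V) $$ (k,s) = cinner n (col ?U k) (col ?V s)" by (rule cinner_cols[symmetric, OF Uc Vc ks])
      also have "\<dots> = cinner n (us ! k) (vs ! s)" using ks lus lvs uc vc by simp
      finally show "(cmod ((adj ?U * ?V) $$ (k,s)))^2 = 1 / real n" using mu ks unfolding mutually_unbiased_def by simp
    qed
    have R: "Rcond n a b (\<lambda>k s. (adj ?U * ?V) $$ (k,s))"
      unfolding Rcond_def using simple_iff[OF U Aeq] simple_iff[OF V Beq] scalar_iff[OF n U Aeq] scalar_iff[OF n V Beq]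
        C w by blast
    show "adj ?M * ?M = dmat (n*n) (\<lambda>_. of_nat n)" using R G_iff_R[OF n U V A B Aeq Beq] by simp
  qed
  show ?thesis unfolding y_def[symmetric] using le eqiff main by simp
qed


end
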